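(* The isomorphism relation $\cong_{\mathrm{Gr}}$ on the standard Borel space of countable graphs SPB-reduces to each of: the isomorphism relation on countable partial orders; the isomorphism relation on countable semigroups; the isomorphism relation on countable unital rings. That is, for each such class $\mathcal D$ there is a Borel map $f$ from countable graphs (with universe $\mathbb{N}$) to $X_{\mathcal D}$ such that $\Gamma_1\cong\Gamma_2\iff f(\Gamma_1)\cong f(\Gamma_2)$ and $\mathrm{Aut}(\Gamma)\cong\mathrm{Aut}(f(\Gamma))$ for every graph $\Gamma$.
   Context: For a class $\mathcal D$ of countable structures, $X_{\mathcal D}$ is the standard Borel space of structures in $\mathcal D$ with universe $\mathbb{N}$, with the logic action of $S_\infty$ (the Polish group of permutations of $\mathbb{N}$). A stabilizer-preserving Borel (SPB) reduction between the isomorphism relations is a Borel reduction $f$ of isomorphism to isomorphism such that the automorphism group of each $x$ is isomorphic to the automorphism group of $f(x)$. *)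

theory Defs
  imports "HOL-Probability.Probability" "HOL-Algebra.Group"
begin

text \<open>The coding space carries the product sigma-algebra of discrete countable
  factors, i.e. the Borel sigma-algebra of the Polish product topology.\<close>

definition code_space :: "('a \<Rightarrow> 'b) measure" where
  "code_space = PiM UNIV (\<lambda>_. count_space UNIV)"

definition ring_code_space :: "((nat \<times> nat \<Rightarrow> nat) \<times> (nat \<times> nat \<Rightarrow> nat)) measure" where
  "ring_code_space = code_space \<Otimes>\<^sub>M code_space"

definition graphs :: "(nat \<times> nat \<Rightarrow> bool) set" where
  "graphs = {E. \<forall>i j. (E (i, j) \<longleftrightarrow> E (j, i)) \<and> \<not> E (i, i)}"

definition partial_orders :: "(nat \<times> nat \<Rightarrow> bool) set" where
  "partial_orders = {R. (\<forall>i. R (i, i)) \<and> (\<forall>i j. R (i, j) \<and> R (j, i) \<longrightarrow> i = j)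
      \<and> (\<forall>i j k. R (i, j) \<and> R (j, k) \<longrightarrow> R (i, k))}"

definition semigroups :: "(nat \<times> nat \<Rightarrow> nat) set" where
  "semigroups = {m. \<forall>a b c. m (m (a, b), c) = m (a, m (b, c))}"

text \<open>Unital rings, coded by (addition, multiplication); zero, one and negation
  are determined by these operations.\<close>
definition unital_rings :: "((nat \<times> nat \<Rightarrow> nat) \<times> (nat \<times> nat \<Rightarrow> nat)) set" where
  "unital_rings = {(p, m).
      (\<forall>a b c. p (p (a, b), c) = p (a, p (b, c))) \<and>
      (\<forall>a b. p (a, b) = p (b, a)) \<and>
      (\<exists>z. (\<forall>a. p (z, a) = a) \<and> (\<forall>a. \<exists>b. p (a, b) = z)) \<and>
      (\<forall>a b c. m (m (a, b), c) = m (a, m (b, c))) \<and>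
      (\<exists>u. \<forall>a. m (u, a) = a \<and> m (a, u) = a) \<and>
      (\<forall>a b c. m (a, p (b, c)) = p (m (a, b), m (a, c))) \<and>
      (\<forall>a b c. m (p (a, b), c) = p (m (a, c), m (b, c)))}"

definition rel_preserving :: "(nat \<times> nat \<Rightarrow> bool) \<Rightarrow> (nat \<times> nat \<Rightarrow> bool) \<Rightarrow> (nat \<Rightarrow> nat) \<Rightarrow> bool" where
  "rel_preserving R S \<pi> \<longleftrightarrow> bij \<pi> \<and> (\<forall>i j. R (i, j) \<longleftrightarrow> S (\<pi> i, \<pi> j))"

definition op_preserving :: "(nat \<times> nat \<Rightarrow> nat) \<Rightarrow> (nat \<times> nat \<Rightarrow> nat) \<Rightarrow> (nat \<Rightarrow> nat) \<Rightarrow> bool" where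
  "op_preserving m n \<pi> \<longleftrightarrow> bij \<pi> \<and> (\<forall>a b. \<pi> (m (a, b)) = n (\<pi> a, \<pi> b))"

definition ring_preserving ::
  "((nat \<times> nat \<Rightarrow> nat) \<times> (nat \<times> nat \<Rightarrow> nat)) \<Rightarrow> ((nat \<times> nat \<Rightarrow> nat) \<times> (nat \<times> nat \<Rightarrow> nat)) \<Rightarrow> (nat \<Rightarrow> nat) \<Rightarrow> bool" where
  "ring_preserving x y \<pi> \<longleftrightarrow> op_preserving (fst x) (fst y) \<pi> \<and> op_preserving (snd x) (snd y) \<pi>"

definition struct_iso :: "('x \<Rightarrow> 'x \<Rightarrow> (nat \<Rightarrow> nat) \<Rightarrow> bool) \<Rightarrow> 'x \<Rightarrow> 'x \<Rightarrow> bool" where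
  "struct_iso P x y \<longleftrightarrow> (\<exists>\<pi>. P x y \<pi>)"

definition aut_group :: "('x \<Rightarrow> 'x \<Rightarrow> (nat \<Rightarrow> nat) \<Rightarrow> bool) \<Rightarrow> 'x \<Rightarrow> (nat \<Rightarrow> nat) monoid" where
  "aut_group P x = \<lparr>carrier = {\<pi>. P x x \<pi>}, mult = (\<circ>), one = id\<rparr>"

definition spb_reduction ::
  "'x measure \<Rightarrow> 'x set \<Rightarrow> ('x \<Rightarrow> 'x \<Rightarrow> (nat \<Rightarrow> nat) \<Rightarrow> bool) \<Rightarrow>
   'y measure \<Rightarrow> 'y set \<Rightarrow> ('y \<Rightarrow> 'y \<Rightarrow> (nat \<Rightarrow> nat) \<Rightarrow> bool) \<Rightarrow> ('x \<Rightarrow> 'y) \<Rightarrow> bool" where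
  "spb_reduction M A P N B Q f \<longleftrightarrow>
     f \<in> measurable (restrict_space M A) (restrict_space N B) \<and>
     (\<forall>x\<in>A. \<forall>y\<in>A. struct_iso P x y \<longleftrightarrow> struct_iso Q (f x) (f y)) \<and>
     (\<forall>x\<in>A. aut_group P x \<cong> aut_group Q (f x))"

end

theory Submission
  imports Defs "HOL-Library.Countable"
begin


lemma generic_spb:
  fixes f :: "(nat \<times> nat \<Rightarrow> bool) \<Rightarrow> 'y"
  assumes L1: "\<And>x y \<pi>. x \<in> graphs \<Longrightarrow> y \<in> graphs \<Longrightarrow> rel_preserving x y \<pi> \<Longrightarrow> Q (f x) (f y) (lift x y \<pi>)"
  and L2: "\<And>x y \<psi>. x \<in> graphs \<Longrightarrow> y \<in> graphs \<Longrightarrow> Q (f x) (f y) \<psi> \<Longrightarrow> \<exists>\<pi>. rel_preserving x y \<pi> \<and> \<psi> = lift x y \<pi>"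
  and L3: "\<And>x \<pi> \<rho>. x \<in> graphs \<Longrightarrow> rel_preserving x x \<pi> \<Longrightarrow> rel_preserving x x \<rho> \<Longrightarrow> lift x x (\<pi> \<circ> \<rho>) = lift x x \<pi> \<circ> lift x x \<rho>"
  and L4: "\<And>x \<pi> \<rho>. x \<in> graphs \<Longrightarrow> rel_preserving x x \<pi> \<Longrightarrow> rel_preserving x x \<rho> \<Longrightarrow> lift x x \<pi> = lift x x \<rho> \<Longrightarrow> \<pi> = \<rho>"
  shows "(\<forall>x\<in>graphs. \<forall>y\<in>graphs. struct_iso rel_preserving x y \<longleftrightarrow> struct_iso Q (f x) (f y)) \<and> (\<forall>x\<in>graphs. aut_group rel_preserving x \<cong> aut_group Q (f x))"
proof (intro conjI ballI)
  fix x y assume x: "x \<in> graphs" and y: "y \<in> graphs"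
  show "struct_iso rel_preserving x y \<longleftrightarrow> struct_iso Q (f x) (f y)"
    unfolding struct_iso_def using L1[OF x y] L2[OF x y] by blast
next
  fix x assume x: "x \<in> graphs"
  show "aut_group rel_preserving x \<cong> aut_group Q (f x)"
  proof (rule is_isoI)
    have a: "lift x x \<in> {\<pi>. rel_preserving x x \<pi>} \<rightarrow> {\<psi>. Q (f x) (f x) \<psi>}" using L1[OF x x] by auto
    have b: "\<forall>a\<in>{\<pi>. rel_preserving x x \<pi>}. \<forall>b\<in>{\<pi>. rel_preserving x x \<pi>}. lift x x (a \<circ> b) = lift x x a \<circ> lift x x b" using L3[OF x] by auto
    have c: "bij_betw (lift x x) {\<pi>. rel_preserving x x \<pi>} {\<psi>. Q (f x) (f x) \<psi>}"
      unfolding bij_betw_def inj_on_def using L1[OF x x] L2[OF x x] L4[OF x] by auto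
    show "lift x x \<in> iso (aut_group rel_preserving x) (aut_group Q (f x))"
      unfolding iso_def hom_def aut_group_def using a b c by simp
  qed
qed

datatype U = Zu | Vu nat | Wu nat | Qu nat nat

instance U :: countable by countable_datatype

definition Uset :: "U set" where
  "Uset = {Zu} \<union> range Vu \<union> range Wu \<union> {Qu i j | i j. i < j}"

lemma Uset_inf: "infinite Uset"
proof
  assume "finite Uset"
  then have "finite (range Vu)" unfolding Uset_def by (auto intro: finite_subset)
  moreover have "inj Vu" by (auto simp: inj_def)
  ultimately show False using finite_imageD by fastforce
qed

definition uu :: "nat \<Rightarrow> U" where "uu = from_nat_into Uset"
definition ui :: "U \<Rightarrow> nat" where "ui = inv_into UNIV uu"

lemma uu_bij: "bij_betw uu UNIV Uset"
  unfolding uu_def by (rule bij_betw_from_nat_into) (auto simp: Uset_inf)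

lemma uu_in[simp]: "uu n \<in> Uset" using uu_bij bij_betwE by blast
lemma uu_ui[simp]: "a \<in> Uset \<Longrightarrow> uu (ui a) = a"
  unfolding ui_def using uu_bij by (meson bij_betw_inv_into_right)
lemma ui_uu[simp]: "ui (uu n) = n"
  unfolding ui_def using uu_bij by (simp add: bij_betw_imp_inj_on)
lemma uu_inj: "uu n = uu m \<longleftrightarrow> n = m" by (metis ui_uu)


definition leU :: "(nat \<times> nat \<Rightarrow> bool) \<Rightarrow> U \<Rightarrow> U \<Rightarrow> bool" where
  "leU E a b \<longleftrightarrow> a = b \<or> a = Zu \<or> (\<exists>i. a = Vu i \<and> (b = Wu i \<or> (\<exists>k. b = Qu i k) \<or> (\<exists>k. b = Qu k i)))
     \<or> (\<exists>i. a = Wu i \<and> (\<exists>k l. b = Qu k l \<and> (i = k \<or> i = l) \<and> E (k, l)))"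

lemma leU_refl: "leU E a a" by (simp add: leU_def)
lemma leU_antisym: "leU E a b \<Longrightarrow> leU E b a \<Longrightarrow> a = b" by (auto simp: leU_def)
lemma leU_trans: "leU E a b \<Longrightarrow> leU E b c \<Longrightarrow> leU E a c" by (auto simp: leU_def)

definition fP :: "(nat \<times> nat \<Rightarrow> bool) \<Rightarrow> (nat \<times> nat \<Rightarrow> bool)" where
  "fP E = (\<lambda>(n, m). leU E (uu n) (uu m))"

lemma fP_po: "fP E \<in> partial_orders"
  unfolding partial_orders_def fP_def
  by (auto intro: leU_refl leU_trans dest: leU_antisym simp: uu_inj)

fun liftU :: "(nat \<Rightarrow> nat) \<Rightarrow> U \<Rightarrow> U" where
  "liftU \<pi> Zu = Zu"
| "liftU \<pi> (Vu i) = Vu (\<pi> i)"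
| "liftU \<pi> (Wu i) = Wu (\<pi> i)"
| "liftU \<pi> (Qu i j) = Qu (min (\<pi> i) (\<pi> j)) (max (\<pi> i) (\<pi> j))"

lemma liftU_comp: "liftU (\<pi> \<circ> \<rho>) a = liftU \<pi> (liftU \<rho> a)"
  by (cases a) (auto simp: min_def max_def)

lemma liftU_Uset: "inj \<pi> \<Longrightarrow> a \<in> Uset \<Longrightarrow> liftU \<pi> a \<in> Uset"
  by (cases a) (auto simp: Uset_def min_def max_def inj_eq)

lemma liftU_inv: "bij \<pi> \<Longrightarrow> a \<in> Uset \<Longrightarrow> liftU (inv_into UNIV \<pi>) (liftU \<pi> a) = a"
  by (cases a) (auto simp: Uset_def min_def max_def bij_is_inj)

lemma liftU_bij: "bij \<pi> \<Longrightarrow> bij_betw (liftU \<pi>) Uset Uset"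
proof -
  assume b: "bij \<pi>"
  have bi: "bij (inv_into UNIV \<pi>)" using b by (simp add: bij_imp_bij_inv)
  have ii: "inv_into UNIV (inv_into UNIV \<pi>) = \<pi>" using b by (simp add: inv_inv_eq)
  show ?thesis
  proof (rule bij_betw_byWitness[where f'="liftU (inv_into UNIV \<pi>)"])
    show "\<forall>a\<in>Uset. liftU (inv_into UNIV \<pi>) (liftU \<pi> a) = a" using liftU_inv[OF b] by auto
    show "\<forall>a\<in>Uset. liftU \<pi> (liftU (inv_into UNIV \<pi>) a) = a" using liftU_inv[OF bi] ii by auto
    show "liftU \<pi> ` Uset \<subseteq> Uset" using liftU_Uset b bij_is_inj by blast
    show "liftU (inv_into UNIV \<pi>) ` Uset \<subseteq> Uset" using liftU_Uset bi bij_is_inj by blast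
  qed
qed

lemma graph_sym: "E \<in> graphs \<Longrightarrow> E (i, j) = E (j, i)" by (simp add: graphs_def)
lemma graph_irr: "E \<in> graphs \<Longrightarrow> \<not> E (i, i)" by (simp add: graphs_def)

lemma liftU_le:
  assumes b: "bij \<pi>" and p: "\<forall>i j. E1 (i, j) \<longleftrightarrow> E2 (\<pi> i, \<pi> j)" and g2: "E2 \<in> graphs"
    and a: "a \<in> Uset" and bb: "b \<in> Uset"
  shows "leU E2 (liftU \<pi> a) (liftU \<pi> b) \<longleftrightarrow> leU E1 a b"
proof -
  have inj: "\<And>x y. \<pi> x = \<pi> y \<longleftrightarrow> x = y" using b by (simp add: bij_is_inj inj_eq)
  have s2: "\<And>x y. E2 (x, y) = E2 (y, x)" using graph_sym[OF g2] by blast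
  show ?thesis using a bb
    apply (cases a; cases b)
    apply (auto simp: leU_def Uset_def inj p min_def max_def)
    apply (metis s2)+
    done
qed

lemma Wchar: "w \<in> Uset \<Longrightarrow> (leU E (Vu i) w \<and> w \<noteq> Vu i \<and> (\<forall>j. leU E (Vu j) w \<longrightarrow> j = i)) \<longleftrightarrow> w = Wu i"
  by (auto simp: Uset_def leU_def)

lemma Qchar: "q \<in> Uset \<Longrightarrow> leU E (Vu a) q \<Longrightarrow> leU E (Vu b) q \<Longrightarrow> a \<noteq> b \<Longrightarrow> q = Qu (min a b) (max a b)"
  by (auto simp: Uset_def leU_def min_def max_def)

lemma leU_WQ: "k < l \<Longrightarrow> leU E (Wu k) (Qu k l) \<longleftrightarrow> E (k, l)"
  by (auto simp: leU_def)

lemma rigidU: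
  assumes g1: "E1 \<in> graphs" and g2: "E2 \<in> graphs"
  and bj: "bij_betw \<Psi> Uset Uset"
  and le: "\<And>a b. a \<in> Uset \<Longrightarrow> b \<in> Uset \<Longrightarrow> leU E1 a b \<longleftrightarrow> leU E2 (\<Psi> a) (\<Psi> b)"
  shows "\<exists>\<pi>. bij \<pi> \<and> (\<forall>i j. E1 (i, j) \<longleftrightarrow> E2 (\<pi> i, \<pi> j)) \<and> (\<forall>a\<in>Uset. \<Psi> a = liftU \<pi> a)"
proof -
  have inU: "\<And>a. a \<in> Uset \<Longrightarrow> \<Psi> a \<in> Uset" using bj bij_betwE by blast
  have injP: "\<And>a b. a \<in> Uset \<Longrightarrow> b \<in> Uset \<Longrightarrow> \<Psi> a = \<Psi> b \<longleftrightarrow> a = b"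
    using bj by (auto simp: bij_betw_def inj_on_def)
  have surjP: "\<And>c. c \<in> Uset \<Longrightarrow> \<exists>b\<in>Uset. c = \<Psi> b" using bj by (auto simp: bij_betw_def)
  have ZU: "Zu \<in> Uset" "\<And>i. Vu i \<in> Uset" "\<And>i. Wu i \<in> Uset" "\<And>i j. i < j \<Longrightarrow> Qu i j \<in> Uset"
    by (auto simp: Uset_def)
  have PZ: "\<Psi> Zu = Zu"
  proof -
    obtain b where b: "b \<in> Uset" "Zu = \<Psi> b" using surjP ZU(1) by blast
    have "leU E1 Zu b" by (simp add: leU_def)
    then have "leU E2 (\<Psi> Zu) Zu" using le[OF ZU(1) b(1)] b(2) by simp
    then show ?thesis by (auto simp: leU_def)
  qed
  define atom where "atom E a \<longleftrightarrow> a \<in> Uset \<and> a \<noteq> Zu \<and> (\<forall>b\<in>Uset. leU E b a \<longrightarrow> b = a \<or> b = Zu)" for E a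
  have atomV: "\<And>E a. atom E a \<longleftrightarrow> (\<exists>i. a = Vu i)"
  proof
    fix E a assume h: "atom E a"
    then have a: "a \<in> Uset" "a \<noteq> Zu" and m: "\<And>b. b \<in> Uset \<Longrightarrow> leU E b a \<Longrightarrow> b = a \<or> b = Zu"
      by (auto simp: atom_def)
    show "\<exists>i. a = Vu i"
    proof (cases a)
      case (Wu i) then show ?thesis using m[OF ZU(2)[of i]] by (auto simp: leU_def)
    next
      case (Qu k l) then show ?thesis using m[OF ZU(2)[of k]] by (auto simp: leU_def)
    qed (use a in auto)
  next
    fix E a assume "\<exists>i. a = Vu i"
    then show "atom E a" by (auto simp: atom_def leU_def Uset_def)
  qed
  have at12: "\<And>a. a \<in> Uset \<Longrightarrow> atom E1 a \<longleftrightarrow> atom E2 (\<Psi> a)"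
  proof -
    fix a assume a: "a \<in> Uset"
    show "atom E1 a \<longleftrightarrow> atom E2 (\<Psi> a)"
    proof
      assume h: "atom E1 a"
      show "atom E2 (\<Psi> a)" unfolding atom_def
      proof (intro conjI ballI impI)
        show "\<Psi> a \<in> Uset" using inU a .
        show "\<Psi> a \<noteq> Zu" using h PZ injP[OF a ZU(1)] by (auto simp: atom_def)
        fix c assume c: "c \<in> Uset" "leU E2 c (\<Psi> a)"
        obtain b where b: "b \<in> Uset" "c = \<Psi> b" using surjP c(1) by blast
        have "leU E1 b a" using le[OF b(1) a] c b by simp
        then have "b = a \<or> b = Zu" using h b(1) by (auto simp: atom_def)
        then show "c = \<Psi> a \<or> c = Zu" using b PZ by auto
      qed
    next
      assume h: "atom E2 (\<Psi> a)"
      show "atom E1 a" unfolding atom_def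
      proof (intro conjI ballI impI)
        show "a \<in> Uset" using a .
        show "a \<noteq> Zu" using h PZ by (auto simp: atom_def)
        fix b assume b: "b \<in> Uset" "leU E1 b a"
        have "leU E2 (\<Psi> b) (\<Psi> a)" using le[OF b(1) a] b by simp
        then have "\<Psi> b = \<Psi> a \<or> \<Psi> b = Zu" using h inU[OF b(1)] by (auto simp: atom_def)
        then show "b = a \<or> b = Zu" using injP[OF b(1) a] injP[OF b(1) ZU(1)] PZ by auto
      qed
    qed
  qed
  define \<pi> where "\<pi> i = (SOME j. \<Psi> (Vu i) = Vu j)" for i
  have PV: "\<And>i. \<Psi> (Vu i) = Vu (\<pi> i)"
  proof -
    fix i
    have "atom E2 (\<Psi> (Vu i))" using at12[OF ZU(2)] atomV by blast
    then obtain j where "\<Psi> (Vu i) = Vu j" using atomV by blast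
    then show "\<Psi> (Vu i) = Vu (\<pi> i)" unfolding \<pi>_def using someI[of "\<lambda>j. \<Psi> (Vu i) = Vu j" j] by simp
  qed
  have injpi: "inj \<pi>"
    unfolding inj_def using PV injP[OF ZU(2) ZU(2)] by (metis U.inject(1))
  have surjpi: "surj \<pi>"
  proof -
    { fix j
      obtain b where b: "b \<in> Uset" "Vu j = \<Psi> b" using surjP ZU(2) by blast
      have "atom E2 (\<Psi> b)" using atomV b(2) by metis
      then have "atom E1 b" using at12[OF b(1)] by simp
      then obtain i where "b = Vu i" using atomV by blast
      then have "j = \<pi> i" using b PV by simp
      then have "j \<in> range \<pi>" by simp }
    then show ?thesis by auto
  qed
  have bpi: "bij \<pi>" by (simp add: bij_def injpi surjpi)
  have PW: "\<And>i. \<Psi> (Wu i) = Wu (\<pi> i)"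
  proof -
    fix i
    have "leU E2 (Vu (\<pi> i)) (\<Psi> (Wu i))" using le[OF ZU(2) ZU(3), of i i] PV by (simp add: leU_def)
    moreover have "\<Psi> (Wu i) \<noteq> Vu (\<pi> i)" using PV injP[OF ZU(3) ZU(2), of i i] by auto
    moreover have "\<forall>j. leU E2 (Vu j) (\<Psi> (Wu i)) \<longrightarrow> j = \<pi> i"
    proof (intro allI impI)
      fix j assume h: "leU E2 (Vu j) (\<Psi> (Wu i))"
      obtain j' where j': "j = \<pi> j'" using surjpi by (metis surj_f_inv_f)
      have "leU E1 (Vu j') (Wu i)" using le[OF ZU(2) ZU(3), of j' i] h PV j' by simp
      then show "j = \<pi> i" using j' by (simp add: leU_def)
    qed
    ultimately show "\<Psi> (Wu i) = Wu (\<pi> i)" using Wchar[OF inU[OF ZU(3)]] by blast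
  qed
  have PQ: "\<And>k l. k < l \<Longrightarrow> \<Psi> (Qu k l) = Qu (min (\<pi> k) (\<pi> l)) (max (\<pi> k) (\<pi> l))"
  proof -
    fix k l :: nat assume kl: "k < l"
    have q: "Qu k l \<in> Uset" using ZU(4)[OF kl] .
    have "leU E2 (Vu (\<pi> k)) (\<Psi> (Qu k l))" using le[OF ZU(2) q, of k] PV by (simp add: leU_def)
    moreover have "leU E2 (Vu (\<pi> l)) (\<Psi> (Qu k l))" using le[OF ZU(2) q, of l] PV by (simp add: leU_def)
    moreover have "\<pi> k \<noteq> \<pi> l" using kl injpi by (metis inj_eq less_irrefl)
    ultimately show "\<Psi> (Qu k l) = Qu (min (\<pi> k) (\<pi> l)) (max (\<pi> k) (\<pi> l))"
      using Qchar[OF inU[OF q]] by blast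
  qed
  have PL: "\<forall>a\<in>Uset. \<Psi> a = liftU \<pi> a"
    by (auto simp: Uset_def PZ PV PW PQ)
  have PE: "\<forall>i j. E1 (i, j) \<longleftrightarrow> E2 (\<pi> i, \<pi> j)"
  proof (intro allI)
    fix i j :: nat
    show "E1 (i, j) \<longleftrightarrow> E2 (\<pi> i, \<pi> j)"
    proof (cases "i = j")
      case True then show ?thesis using graph_irr[OF g1] graph_irr[OF g2] by simp
    next
      case False
      define k where "k = min i j"
      define l where "l = max i j"
      have kl: "k < l" using False by (simp add: k_def l_def)
      have e1: "E1 (i, j) = E1 (k, l)" using graph_sym[OF g1] by (auto simp: k_def l_def min_def max_def)
      have pkl: "\<pi> k < \<pi> l \<or> \<pi> l < \<pi> k" using kl injpi by (metis inj_eq less_irrefl linorder_neqE_nat)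
      have e2: "E2 (\<pi> i, \<pi> j) = E2 (min (\<pi> k) (\<pi> l), max (\<pi> k) (\<pi> l))"
        using graph_sym[OF g2] by (auto simp: k_def l_def min_def max_def)
      have m: "min (\<pi> k) (\<pi> l) < max (\<pi> k) (\<pi> l)" using pkl by auto
      have "E1 (k, l) \<longleftrightarrow> leU E1 (Wu k) (Qu k l)" using leU_WQ[OF kl] by simp
      also have "\<dots> \<longleftrightarrow> leU E2 (Wu (\<pi> k)) (Qu (min (\<pi> k) (\<pi> l)) (max (\<pi> k) (\<pi> l)))"
        using le[OF ZU(3) ZU(4)[OF kl]] PW PQ[OF kl] by simp
      also have "\<dots> \<longleftrightarrow> E2 (min (\<pi> k) (\<pi> l), max (\<pi> k) (\<pi> l))"
        using pkl by (auto simp: leU_def min_def max_def)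
      finally show ?thesis using e1 e2 by simp
    qed
  qed
  show ?thesis using bpi PE PL by blast
qed

definition liftP :: "(nat \<Rightarrow> nat) \<Rightarrow> nat \<Rightarrow> nat" where
  "liftP \<pi> = ui \<circ> liftU \<pi> \<circ> uu"

lemma ui_bij: "bij_betw ui Uset UNIV"
  unfolding ui_def by (rule bij_betw_inv_into[OF uu_bij])

lemma liftP_bij: "bij \<pi> \<Longrightarrow> bij (liftP \<pi>)"
  unfolding liftP_def
  by (rule bij_betw_trans[OF uu_bij bij_betw_trans[OF liftU_bij ui_bij]])

lemma P_L1: "x \<in> graphs \<Longrightarrow> y \<in> graphs \<Longrightarrow> rel_preserving x y \<pi> \<Longrightarrow> rel_preserving (fP x) (fP y) (liftP \<pi>)"
  unfolding rel_preserving_def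
proof (intro conjI allI)
  assume g: "x \<in> graphs" "y \<in> graphs" and r: "bij \<pi> \<and> (\<forall>i j. x (i, j) = y (\<pi> i, \<pi> j))"
  show "bij (liftP \<pi>)" using liftP_bij r by blast
  fix i j
  have inU: "\<And>n. liftU \<pi> (uu n) \<in> Uset" using liftU_Uset r bij_is_inj uu_in by blast
  have b: "bij \<pi>" and p: "\<forall>i j. x (i, j) = y (\<pi> i, \<pi> j)" using r by auto
  have "fP y (liftP \<pi> i, liftP \<pi> j) = leU y (liftU \<pi> (uu i)) (liftU \<pi> (uu j))"
    unfolding fP_def liftP_def comp_def using inU by simp
  also have "\<dots> = leU x (uu i) (uu j)" using liftU_le[OF b p g(2) uu_in uu_in] .
  finally show "fP x (i, j) = fP y (liftP \<pi> i, liftP \<pi> j)" by (simp add: fP_def)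
qed

lemma P_L2: "x \<in> graphs \<Longrightarrow> y \<in> graphs \<Longrightarrow> rel_preserving (fP x) (fP y) \<psi> \<Longrightarrow> \<exists>\<pi>. rel_preserving x y \<pi> \<and> \<psi> = liftP \<pi>"
proof -
  assume g: "x \<in> graphs" "y \<in> graphs" and r: "rel_preserving (fP x) (fP y) \<psi>"
  define \<Psi> where "\<Psi> = uu \<circ> \<psi> \<circ> ui"
  have bp: "bij \<psi>" using r by (simp add: rel_preserving_def)
  have bP: "bij_betw \<Psi> Uset Uset" unfolding \<Psi>_def
    by (rule bij_betw_trans[OF ui_bij bij_betw_trans[OF bp uu_bij]])
  have le: "\<And>a b. a \<in> Uset \<Longrightarrow> b \<in> Uset \<Longrightarrow> leU x a b \<longleftrightarrow> leU y (\<Psi> a) (\<Psi> b)"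
  proof -
    fix a b assume a: "a \<in> Uset" and b: "b \<in> Uset"
    have "leU x a b = fP x (ui a, ui b)" using a b by (simp add: fP_def)
    also have "\<dots> = fP y (\<psi> (ui a), \<psi> (ui b))" using r by (simp add: rel_preserving_def)
    also have "\<dots> = leU y (\<Psi> a) (\<Psi> b)" by (simp add: fP_def \<Psi>_def)
    finally show "leU x a b \<longleftrightarrow> leU y (\<Psi> a) (\<Psi> b)" .
  qed
  obtain \<pi> where p: "bij \<pi>" "\<forall>i j. x (i, j) \<longleftrightarrow> y (\<pi> i, \<pi> j)" "\<forall>a\<in>Uset. \<Psi> a = liftU \<pi> a"
    using rigidU[OF g bP le] by blast
  have "\<psi> = liftP \<pi>"
  proof
    fix n
    have "\<Psi> (uu n) = uu (\<psi> n)" by (simp add: \<Psi>_def)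
    then have "uu (\<psi> n) = liftU \<pi> (uu n)" using p(3) by simp
    then have "ui (uu (\<psi> n)) = ui (liftU \<pi> (uu n))" by simp
    then show "\<psi> n = liftP \<pi> n" unfolding liftP_def by simp
  qed
  then show ?thesis using p by (auto simp: rel_preserving_def)
qed

lemma P_L3:
  assumes "rel_preserving x x \<pi>" "rel_preserving x x \<rho>"
  shows "liftP (\<pi> \<circ> \<rho>) = liftP \<pi> \<circ> liftP \<rho>"
proof (rule ext)
  fix n
  have "inj \<rho>" using assms(2) by (simp add: rel_preserving_def bij_is_inj)
  then have m: "liftU \<rho> (uu n) \<in> Uset" using liftU_Uset uu_in by blast
  have "liftP (\<pi> \<circ> \<rho>) n = ui (liftU \<pi> (liftU \<rho> (uu n)))"
    unfolding liftP_def comp_def using liftU_comp[of \<pi> \<rho>] by (simp add: comp_def)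
  also have "\<dots> = ui (liftU \<pi> (uu (ui (liftU \<rho> (uu n)))))" using uu_ui[OF m] by simp
  also have "\<dots> = (liftP \<pi> \<circ> liftP \<rho>) n" unfolding liftP_def by simp
  finally show "liftP (\<pi> \<circ> \<rho>) n = (liftP \<pi> \<circ> liftP \<rho>) n" .
qed

lemma P_L4: "liftP \<pi> = liftP \<rho> \<Longrightarrow> \<pi> = \<rho>"
proof
  fix i assume h: "liftP \<pi> = liftP \<rho>"
  have "Vu i \<in> Uset" by (simp add: Uset_def)
  then have "ui (Vu (\<pi> i)) = ui (Vu (\<rho> i))" using fun_cong[OF h, of "ui (Vu i)"] by (simp add: liftP_def)
  moreover have "Vu (\<pi> i) \<in> Uset" "Vu (\<rho> i) \<in> Uset" by (auto simp: Uset_def)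
  ultimately have "uu (ui (Vu (\<pi> i))) = uu (ui (Vu (\<rho> i)))" by simp
  then show "\<pi> i = \<rho> i" by (simp add: Uset_def)
qed





definition meetU :: "(nat \<times> nat \<Rightarrow> bool) \<Rightarrow> U \<Rightarrow> U \<Rightarrow> U" where
  "meetU E a b = (if leU E a b then a else if leU E b a then b
     else if (\<exists>k. leU E (Wu k) a \<and> leU E (Wu k) b) then Wu (SOME k. leU E (Wu k) a \<and> leU E (Wu k) b)
     else if (\<exists>k. leU E (Vu k) a \<and> leU E (Vu k) b) then Vu (SOME k. leU E (Vu k) a \<and> leU E (Vu k) b)
     else Zu)"

lemma WV: "leU E (Wu k) a \<Longrightarrow> a \<noteq> Wu k \<Longrightarrow> leU E (Vu k) a"
  by (auto simp: leU_def)

lemma V_uniq: "a \<in> Uset \<Longrightarrow> b \<in> Uset \<Longrightarrow> a \<noteq> b \<Longrightarrow> leU E (Vu k) a \<Longrightarrow> leU E (Vu k) b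
  \<Longrightarrow> leU E (Vu k') a \<Longrightarrow> leU E (Vu k') b \<Longrightarrow> k = k'"
proof (rule ccontr)
  assume "a \<in> Uset" "b \<in> Uset" "a \<noteq> b" "leU E (Vu k) a" "leU E (Vu k) b" "leU E (Vu k') a" "leU E (Vu k') b" "k \<noteq> k'"
  then have "a = Qu (min k k') (max k k')" "b = Qu (min k k') (max k k')" using Qchar by blast+
  then show False using \<open>a \<noteq> b\<close> by simp
qed

lemma W_uniq: "a \<in> Uset \<Longrightarrow> b \<in> Uset \<Longrightarrow> \<not> leU E a b \<Longrightarrow> \<not> leU E b a \<Longrightarrow> leU E (Wu k) a \<Longrightarrow> leU E (Wu k) b
  \<Longrightarrow> leU E (Wu k') a \<Longrightarrow> leU E (Wu k') b \<Longrightarrow> k = k'"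
proof -
  assume h: "a \<in> Uset" "b \<in> Uset" "\<not> leU E a b" "\<not> leU E b a" "leU E (Wu k) a" "leU E (Wu k) b" "leU E (Wu k') a" "leU E (Wu k') b"
  have "a \<noteq> Wu k" "b \<noteq> Wu k" "a \<noteq> Wu k'" "b \<noteq> Wu k'" "a \<noteq> b" using h leU_refl by metis+
  then show "k = k'" using V_uniq[OF h(1,2)] WV h by metis
qed

lemma meet_glb:
  assumes a: "a \<in> Uset" and b: "b \<in> Uset"
  shows "meetU E a b \<in> Uset \<and> leU E (meetU E a b) a \<and> leU E (meetU E a b) b
     \<and> (\<forall>c\<in>Uset. leU E c a \<longrightarrow> leU E c b \<longrightarrow> leU E c (meetU E a b))"
proof (cases "leU E a b")
  case True then show ?thesis using a by (simp add: meetU_def leU_refl)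
next
  case nab: False
  show ?thesis
  proof (cases "leU E b a")
    case True then show ?thesis using b nab by (simp add: meetU_def leU_refl)
  next
    case nba: False
    have ne: "a \<noteq> b" using nab leU_refl by metis
    have noQ: "\<And>c. leU E c a \<Longrightarrow> leU E c b \<Longrightarrow> \<not> (\<exists>k l. c = Qu k l)"
      using nab nba by (auto simp: leU_def)
    show ?thesis
    proof (cases "\<exists>k. leU E (Wu k) a \<and> leU E (Wu k) b")
      case True
      define k0 where "k0 = (SOME k. leU E (Wu k) a \<and> leU E (Wu k) b)"
      have k0: "leU E (Wu k0) a \<and> leU E (Wu k0) b" unfolding k0_def using True by (rule someI_ex)
      have m: "meetU E a b = Wu k0" using nab nba True by (simp add: meetU_def k0_def)
      have "\<forall>c\<in>Uset. leU E c a \<longrightarrow> leU E c b \<longrightarrow> leU E c (Wu k0)"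
      proof (intro ballI impI)
        fix c assume c: "c \<in> Uset" "leU E c a" "leU E c b"
        show "leU E c (Wu k0)"
        proof (cases c)
          case Zu then show ?thesis by (simp add: leU_def)
        next
          case (Vu j)
          have "a \<noteq> Wu k0" "b \<noteq> Wu k0" using k0 nab nba by auto
          then have "leU E (Vu k0) a" "leU E (Vu k0) b" using WV k0 by auto
          then have "j = k0" using V_uniq[OF a b ne] c Vu by blast
          then show ?thesis using Vu by (simp add: leU_def)
        next
          case (Wu j)
          then have "j = k0" using W_uniq[OF a b nab nba] c k0 by blast
          then show ?thesis using Wu leU_refl by simp
        next
          case (Qu k l) then show ?thesis using noQ c by blast
        qed
      qed
      then show ?thesis using m k0 by (simp add: Uset_def)
    next
      case noW: False
      show ?thesis
      proof (cases "\<exists>k. leU E (Vu k) a \<and> leU E (Vu k) b")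
        case True
        define k0 where "k0 = (SOME k. leU E (Vu k) a \<and> leU E (Vu k) b)"
        have k0: "leU E (Vu k0) a \<and> leU E (Vu k0) b" unfolding k0_def using True by (rule someI_ex)
        have m: "meetU E a b = Vu k0" using nab nba noW True by (simp add: meetU_def k0_def)
        have "\<forall>c\<in>Uset. leU E c a \<longrightarrow> leU E c b \<longrightarrow> leU E c (Vu k0)"
        proof (intro ballI impI)
          fix c assume c: "c \<in> Uset" "leU E c a" "leU E c b"
          show "leU E c (Vu k0)"
          proof (cases c)
            case Zu then show ?thesis by (simp add: leU_def)
          next
            case (Vu j)
            then have "j = k0" using V_uniq[OF a b ne] c k0 by blast
            then show ?thesis using Vu leU_refl by simp
          next
            case (Wu j) then show ?thesis using noW c by blast
          next
            case (Qu k l) then show ?thesis using noQ c by blast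
          qed
        qed
        then show ?thesis using m k0 by (simp add: Uset_def)
      next
        case noV: False
        have m: "meetU E a b = Zu" using nab nba noW noV by (simp add: meetU_def)
        have "\<forall>c\<in>Uset. leU E c a \<longrightarrow> leU E c b \<longrightarrow> leU E c Zu"
        proof (intro ballI impI)
          fix c assume c: "c \<in> Uset" "leU E c a" "leU E c b"
          show "leU E c Zu"
          proof (cases c)
            case Zu then show ?thesis by (simp add: leU_def)
          next
            case (Vu j) then show ?thesis using noV c by blast
          next
            case (Wu j) then show ?thesis using noW c by blast
          next
            case (Qu k l) then show ?thesis using noQ c by blast
          qed
        qed
        moreover have "leU E Zu a" "leU E Zu b" by (simp_all add: leU_def)
        ultimately show ?thesis using m by (simp add: Uset_def)
      qed
    qed
  qed
qed



definition glbstr :: "(nat \<times> nat \<Rightarrow> bool) \<Rightarrow> (nat \<times> nat \<Rightarrow> nat) \<Rightarrow> bool" where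
  "glbstr R M \<longleftrightarrow> (\<forall>i. R (i, i)) \<and> (\<forall>i j. R (i, j) \<and> R (j, i) \<longrightarrow> i = j)
     \<and> (\<forall>i j k. R (i, j) \<and> R (j, k) \<longrightarrow> R (i, k))
     \<and> (\<forall>i j. R (M (i, j), i) \<and> R (M (i, j), j)) \<and> (\<forall>i j k. R (k, i) \<longrightarrow> R (k, j) \<longrightarrow> R (k, M (i, j)))"

lemma glbstrD:
  assumes "glbstr R M"
  shows "R (i, i)" "R (i, j) \<Longrightarrow> R (j, i) \<Longrightarrow> i = j" "R (i, j) \<Longrightarrow> R (j, k) \<Longrightarrow> R (i, k)"
    "R (M (i, j), i)" "R (M (i, j), j)" "R (k, i) \<Longrightarrow> R (k, j) \<Longrightarrow> R (k, M (i, j))"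
  using assms unfolding glbstr_def by blast+

lemma glbstr_iff: "glbstr R M \<Longrightarrow> R (i, j) \<longleftrightarrow> M (i, j) = i"
proof
  assume g: "glbstr R M" and r: "R (i, j)"
  have "R (i, M (i, j))" using glbstrD(6)[OF g glbstrD(1)[OF g] r] .
  then show "M (i, j) = i" using glbstrD(2)[OF g] glbstrD(4)[OF g] by blast
next
  assume g: "glbstr R M" and "M (i, j) = i"
  then show "R (i, j)" using glbstrD(5)[OF g, of i j] by simp
qed

lemma glbstr_assoc: "glbstr R M \<Longrightarrow> M (M (a, b), c) = M (a, M (b, c))"
proof -
  assume g: "glbstr R M"
  note D = glbstrD[OF g]
  define x where "x = M (M (a, b), c)"
  define y where "y = M (a, M (b, c))"
  have xa: "R (x, a)" "R (x, b)" "R (x, c)" unfolding x_def using D(3)[OF D(4) D(4)] D(3)[OF D(4) D(5)] D(5) by blast+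
  have "R (x, y)" unfolding y_def using D(6)[OF xa(1) D(6)[OF xa(2) xa(3)]] .
  have ya: "R (y, a)" "R (y, b)" "R (y, c)" unfolding y_def using D(4) D(3)[OF D(5) D(4)] D(3)[OF D(5) D(5)] by blast+
  have "R (y, x)" unfolding x_def using D(6)[OF D(6)[OF ya(1) ya(2)] ya(3)] .
  show ?thesis using D(2) \<open>R (x, y)\<close> \<open>R (y, x)\<close> x_def y_def by blast
qed

lemma glbstr_op_rel:
  assumes g1: "glbstr R1 M1" and g2: "glbstr R2 M2"
  shows "op_preserving M1 M2 \<psi> \<longleftrightarrow> rel_preserving R1 R2 \<psi>"
proof
  assume h: "op_preserving M1 M2 \<psi>"
  then have b: "bij \<psi>" and m: "\<And>i j. \<psi> (M1 (i, j)) = M2 (\<psi> i, \<psi> j)" by (auto simp: op_preserving_def)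
  have inj: "\<And>x y. \<psi> x = \<psi> y \<longleftrightarrow> x = y" using b by (simp add: bij_is_inj inj_eq)
  show "rel_preserving R1 R2 \<psi>" unfolding rel_preserving_def
  proof (intro conjI allI)
    show "bij \<psi>" using b .
    fix i j
    have "R1 (i, j) \<longleftrightarrow> M1 (i, j) = i" using glbstr_iff[OF g1] .
    also have "\<dots> \<longleftrightarrow> \<psi> (M1 (i, j)) = \<psi> i" using inj by simp
    also have "\<dots> \<longleftrightarrow> M2 (\<psi> i, \<psi> j) = \<psi> i" using m by simp
    also have "\<dots> \<longleftrightarrow> R2 (\<psi> i, \<psi> j)" using glbstr_iff[OF g2] by simp
    finally show "R1 (i, j) = R2 (\<psi> i, \<psi> j)" .
  qed
next
  assume h: "rel_preserving R1 R2 \<psi>"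
  then have b: "bij \<psi>" and r: "\<And>i j. R1 (i, j) \<longleftrightarrow> R2 (\<psi> i, \<psi> j)" by (auto simp: rel_preserving_def)
  have sur: "\<And>y. \<psi> (inv_into UNIV \<psi> y) = y" using b by (simp add: bij_is_surj surj_f_inv_f)
  show "op_preserving M1 M2 \<psi>" unfolding op_preserving_def
  proof (intro conjI allI)
    show "bij \<psi>" using b .
    fix i j
    define k where "k = inv_into UNIV \<psi> (M2 (\<psi> i, \<psi> j))"
    have k: "\<psi> k = M2 (\<psi> i, \<psi> j)" using sur k_def by simp
    have "R2 (\<psi> k, \<psi> i)" "R2 (\<psi> k, \<psi> j)" using glbstrD(4,5)[OF g2, of "\<psi> i" "\<psi> j"] k by simp_all
    then have "R1 (k, i)" "R1 (k, j)" using r by blast+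
    then have "R1 (k, M1 (i, j))" using glbstrD(6)[OF g1] by blast
    then have 1: "R2 (M2 (\<psi> i, \<psi> j), \<psi> (M1 (i, j)))" using r k by metis
    have "R1 (M1 (i, j), i)" "R1 (M1 (i, j), j)" using glbstrD(4,5)[OF g1] by blast+
    then have "R2 (\<psi> (M1 (i, j)), \<psi> i)" "R2 (\<psi> (M1 (i, j)), \<psi> j)" using r by blast+
    then have 2: "R2 (\<psi> (M1 (i, j)), M2 (\<psi> i, \<psi> j))" using glbstrD(6)[OF g2] by blast
    show "\<psi> (M1 (i, j)) = M2 (\<psi> i, \<psi> j)" using glbstrD(2)[OF g2 2 1] .
  qed
qed

definition fS :: "(nat \<times> nat \<Rightarrow> bool) \<Rightarrow> (nat \<times> nat \<Rightarrow> nat)" where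
  "fS E = (\<lambda>(n, m). ui (meetU E (uu n) (uu m)))"

lemma fPS_glb: "glbstr (fP E) (fS E)"
proof -
  have mg: "\<And>n m. meetU E (uu n) (uu m) \<in> Uset" using meet_glb uu_in by blast
  show ?thesis unfolding glbstr_def
  proof (intro conjI allI impI)
    fix i show "fP E (i, i)" by (simp add: fP_def leU_refl)
  next
    fix i j assume "fP E (i, j) \<and> fP E (j, i)" then show "i = j"
      by (auto simp: fP_def uu_inj dest: leU_antisym)
  next
    fix i j k assume "fP E (i, j) \<and> fP E (j, k)" then show "fP E (i, k)"
      by (auto simp: fP_def intro: leU_trans)
  next
    fix i j
    show "fP E (fS E (i, j), i)" "fP E (fS E (i, j), j)" using meet_glb[OF uu_in uu_in, of E i j] mg
      by (simp_all add: fP_def fS_def)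
  next
    fix i j k assume "fP E (k, i)" "fP E (k, j)"
    then show "fP E (k, fS E (i, j))" using meet_glb[OF uu_in uu_in, of E i j] mg
      by (simp add: fP_def fS_def)
  qed
qed

lemma fS_semi: "fS E \<in> semigroups"
  unfolding semigroups_def using glbstr_assoc[OF fPS_glb] by blast

lemma S_iff: "op_preserving (fS x) (fS y) \<psi> \<longleftrightarrow> rel_preserving (fP x) (fP y) \<psi>"
  by (rule glbstr_op_rel[OF fPS_glb fPS_glb])



lemma space_code: "space (code_space :: ('a \<Rightarrow> 'b) measure) = UNIV"
  by (simp add: code_space_def space_PiM)

lemma fin_dep_meas:
  fixes F :: "('a \<Rightarrow> bool) \<Rightarrow> 'c::countable"
  assumes K: "finite K" and dep: "\<And>E E'. (\<forall>k\<in>K. E k = E' k) \<Longrightarrow> F E = F E'"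
  shows "F \<in> measurable code_space (count_space UNIV)"
proof -
 have "\<And>c. F -` {c} \<inter> space code_space \<in> sets code_space"
 proof -
  fix c :: 'c
  define P where "P = {p \<in> (\<lambda>S k. k \<in> S) ` Pow K. F p = c}"
  have Pf: "finite P" unfolding P_def using K by simp
  have eq: "F -` {c} \<inter> space code_space = (\<Union>p\<in>P. {E \<in> space code_space. \<forall>k\<in>K. E k = p k})"
  proof (intro Set.set_eqI iffI)
    fix E assume E: "E \<in> F -` {c} \<inter> space code_space"
    define p where "p = (\<lambda>k. k \<in> {k\<in>K. E k})"
    have a: "\<forall>k\<in>K. E k = p k" by (simp add: p_def)
    have "p \<in> (\<lambda>S k. k \<in> S) ` Pow K" unfolding p_def by blast
    moreover have "F p = c" using dep[OF a] E by simp
    ultimately show "E \<in> (\<Union>p\<in>P. {E \<in> space code_space. \<forall>k\<in>K. E k = p k})"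
      using a E unfolding P_def by blast
  next
    fix E assume "E \<in> (\<Union>p\<in>P. {E \<in> space code_space. \<forall>k\<in>K. E k = p k})"
    then obtain p where p: "p \<in> P" "\<forall>k\<in>K. E k = p k" "E \<in> space code_space" by blast
    then show "E \<in> F -` {c} \<inter> space code_space" using dep[OF p(2)] unfolding P_def by auto
  qed
  have "\<And>p::'a \<Rightarrow> bool. {E \<in> space (code_space :: ('a \<Rightarrow> bool) measure). \<forall>k\<in>K. E k = p k} \<in> sets code_space"
  proof -
    fix p :: "'a \<Rightarrow> bool"
    have "\<And>k. (\<lambda>E. E k) \<in> measurable code_space (count_space UNIV)"
      unfolding code_space_def by (rule measurable_component_singleton) simp
    then have "\<And>k. Measurable.pred code_space (\<lambda>E. E k = p k)" by measurable
    then have "Measurable.pred code_space (\<lambda>E. \<forall>k\<in>K. E k = p k)" using K by measurable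
    then show "{E \<in> space code_space. \<forall>k\<in>K. E k = p k} \<in> sets code_space" by measurable
  qed
  then show "F -` {c} \<inter> space code_space \<in> sets code_space"
    unfolding eq using Pf by (intro sets.finite_UN) auto
 qed
 then show ?thesis by (subst measurable_count_space_eq_countable) auto
qed

lemma PiM_meas:
  fixes F :: "'x \<Rightarrow> 'a \<Rightarrow> 'b"
  assumes "\<And>i. (\<lambda>E. F E i) \<in> measurable M (count_space UNIV)"
  shows "F \<in> measurable M code_space"
proof -
  have "(\<lambda>E i. F E i) \<in> measurable M (PiM UNIV (\<lambda>_. count_space UNIV))"
    by (rule measurable_PiM_single') (use assms in auto)
  then show ?thesis by (simp add: code_space_def)
qed

fun Kq :: "U \<Rightarrow> (nat \<times> nat) set" where
  "Kq (Qu k l) = {(k, l)}"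
| "Kq _ = {}"

lemma Kq_fin: "finite (Kq a)" by (cases a) auto

lemma leU_dep: "\<forall>k\<in>Kq b. E k = E' k \<Longrightarrow> leU E a b = leU E' a b"
  by (cases b) (auto simp: leU_def)

lemma meetU_dep:
  assumes "\<forall>k\<in>Kq a \<union> Kq b. E k = E' k"
  shows "meetU E a b = meetU E' a b"
proof -
  have 1: "\<And>x. leU E x a = leU E' x a" using leU_dep assms by blast
  have 2: "\<And>x. leU E x b = leU E' x b" using leU_dep assms by blast
  show ?thesis unfolding meetU_def 1 2 ..
qed

lemma fP_meas: "fP \<in> measurable code_space code_space"
proof (rule PiM_meas)
  fix i :: "nat \<times> nat"
  obtain n m where i: "i = (n, m)" by fastforce
  show "(\<lambda>E. fP E i) \<in> measurable code_space (count_space UNIV)"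
    unfolding i fP_def prod.case
    by (rule fin_dep_meas[OF Kq_fin[of "uu m"]]) (simp add: leU_dep)
qed

lemma fS_meas: "fS \<in> measurable code_space code_space"
proof (rule PiM_meas)
  fix i :: "nat \<times> nat"
  obtain n m where i: "i = (n, m)" by fastforce
  have f: "finite (Kq (uu n) \<union> Kq (uu m))" using Kq_fin by simp
  show "(\<lambda>E. fS E i) \<in> measurable code_space (count_space UNIV)"
    unfolding i fS_def prod.case
    by (rule fin_dep_meas[OF f], rule arg_cong[where f=ui], rule meetU_dep)
qed

lemma meas_restr:
  assumes "f \<in> measurable code_space N" "\<And>x. x \<in> graphs \<Longrightarrow> f x \<in> B"
  shows "f \<in> measurable (restrict_space code_space graphs) (restrict_space N B)"
  using assms by (intro measurable_restrict_space2 measurable_restrict_space1)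
    (auto simp: space_restrict_space)

theorem poset_part: "spb_reduction code_space graphs rel_preserving code_space partial_orders rel_preserving fP"
  unfolding spb_reduction_def
proof (intro conjI)
  show "fP \<in> measurable (restrict_space code_space graphs) (restrict_space code_space partial_orders)"
    by (rule meas_restr[OF fP_meas fP_po])
  show "(\<forall>x\<in>graphs. \<forall>y\<in>graphs. struct_iso rel_preserving x y \<longleftrightarrow> struct_iso rel_preserving (fP x) (fP y))"
    "(\<forall>x\<in>graphs. aut_group rel_preserving x \<cong> aut_group rel_preserving (fP x))"
    using generic_spb[of rel_preserving fP "\<lambda>x y. liftP"] P_L1 P_L2 P_L3 P_L4 by blast+
qed

theorem semi_part: "spb_reduction code_space graphs rel_preserving code_space semigroups op_preserving fS"
  unfolding spb_reduction_def
proof (intro conjI)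
  show "fS \<in> measurable (restrict_space code_space graphs) (restrict_space code_space semigroups)"
    by (rule meas_restr[OF fS_meas fS_semi])
  show "(\<forall>x\<in>graphs. \<forall>y\<in>graphs. struct_iso rel_preserving x y \<longleftrightarrow> struct_iso op_preserving (fS x) (fS y))"
    "(\<forall>x\<in>graphs. aut_group rel_preserving x \<cong> aut_group op_preserving (fS x))"
    using generic_spb[of op_preserving fS "\<lambda>x y. liftP"] P_L1 P_L2 P_L3 P_L4 S_iff by blast+
qed



definition Aset :: "(nat \<times> nat \<Rightarrow> int) set" where
  "Aset = {f. \<exists>d::nat \<Rightarrow> int. \<exists>c. finite {i. d i \<noteq> c} \<and> finite {x. f x \<noteq> d (fst x)}}"

definition RG :: "(nat \<times> nat \<Rightarrow> bool) \<Rightarrow> (nat \<times> nat \<Rightarrow> int) set" where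
  "RG E = {f \<in> Aset. (\<forall>i j k. f (i, j) mod 2 = f (i, k) mod 2) \<and> (\<forall>i j. f (i, j) mod 3 = f (j, i) mod 3)
      \<and> (\<forall>i j. E (i, j) \<longrightarrow> f (i, j) mod 5 = f (j, i) mod 5)}"

definition fadd :: "(nat \<times> nat \<Rightarrow> int) \<Rightarrow> (nat \<times> nat \<Rightarrow> int) \<Rightarrow> (nat \<times> nat \<Rightarrow> int)" where
  "fadd f g = (\<lambda>x. f x + g x)"
definition fmul :: "(nat \<times> nat \<Rightarrow> int) \<Rightarrow> (nat \<times> nat \<Rightarrow> int) \<Rightarrow> (nat \<times> nat \<Rightarrow> int)" where
  "fmul f g = (\<lambda>x. f x * g x)"
definition fneg :: "(nat \<times> nat \<Rightarrow> int) \<Rightarrow> (nat \<times> nat \<Rightarrow> int)" where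
  "fneg f = (\<lambda>x. - f x)"
definition fc :: "int \<Rightarrow> (nat \<times> nat \<Rightarrow> int)" where
  "fc c = (\<lambda>x. c)"
definition smul :: "int \<Rightarrow> (nat \<times> nat \<Rightarrow> int) \<Rightarrow> (nat \<times> nat \<Rightarrow> int)" where
  "smul n f = (\<lambda>x. n * f x)"
definition e30 :: "nat \<times> nat \<Rightarrow> (nat \<times> nat \<Rightarrow> int)" where
  "e30 a = (\<lambda>x. if x = a then 30 else 0)"

lemma Aset_add: assumes "f \<in> Aset" "g \<in> Aset" shows "fadd f g \<in> Aset"
proof -
  obtain d1 c1 where 1: "finite {i. d1 i \<noteq> c1}" "finite {x. f x \<noteq> d1 (fst x)}" using assms(1) by (auto simp: Aset_def)
  obtain d2 c2 where 2: "finite {i. d2 i \<noteq> c2}" "finite {x. g x \<noteq> d2 (fst x)}" using assms(2) by (auto simp: Aset_def)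
  have a: "finite {i. d1 i + d2 i \<noteq> c1 + c2}" by (rule finite_subset[OF _ finite_UnI[OF 1(1) 2(1)]]) auto
  have b: "finite {x. fadd f g x \<noteq> d1 (fst x) + d2 (fst x)}"
    by (rule finite_subset[OF _ finite_UnI[OF 1(2) 2(2)]]) (auto simp: fadd_def)
  show ?thesis unfolding Aset_def
    by (rule CollectI, rule exI[of _ "\<lambda>i. d1 i + d2 i"], rule exI[of _ "c1 + c2"]) (use a b in simp)
qed

lemma Aset_mul: assumes "f \<in> Aset" "g \<in> Aset" shows "fmul f g \<in> Aset"
proof -
  obtain d1 c1 where 1: "finite {i. d1 i \<noteq> c1}" "finite {x. f x \<noteq> d1 (fst x)}" using assms(1) by (auto simp: Aset_def)
  obtain d2 c2 where 2: "finite {i. d2 i \<noteq> c2}" "finite {x. g x \<noteq> d2 (fst x)}" using assms(2) by (auto simp: Aset_def)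
  have a: "finite {i. d1 i * d2 i \<noteq> c1 * c2}" by (rule finite_subset[OF _ finite_UnI[OF 1(1) 2(1)]]) auto
  have b: "finite {x. fmul f g x \<noteq> d1 (fst x) * d2 (fst x)}"
    by (rule finite_subset[OF _ finite_UnI[OF 1(2) 2(2)]]) (auto simp: fmul_def)
  show ?thesis unfolding Aset_def
    by (rule CollectI, rule exI[of _ "\<lambda>i. d1 i * d2 i"], rule exI[of _ "c1 * c2"]) (use a b in simp)
qed

lemma Aset_neg: assumes "f \<in> Aset" shows "fneg f \<in> Aset"
proof -
  obtain d1 c1 where 1: "finite {i. d1 i \<noteq> c1}" "finite {x. f x \<noteq> d1 (fst x)}" using assms(1) by (auto simp: Aset_def)
  have a: "finite {i. - d1 i \<noteq> - c1}" using 1(1) by simp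
  have b: "finite {x. fneg f x \<noteq> - d1 (fst x)}" using 1(2) by (simp add: fneg_def)
  show ?thesis unfolding Aset_def
    by (rule CollectI, rule exI[of _ "\<lambda>i. - d1 i"], rule exI[of _ "- c1"]) (use a b in simp)
qed

lemma Aset_fc: "fc c \<in> Aset"
  unfolding Aset_def fc_def by (rule CollectI, rule exI[of _ "\<lambda>_. c"], rule exI[of _ c]) simp

lemma Aset_fin: "finite {x. f x \<noteq> 0} \<Longrightarrow> f \<in> Aset"
  unfolding Aset_def by (rule CollectI, rule exI[of _ "\<lambda>_. 0"], rule exI[of _ 0]) simp

lemma Aset_row: "(\<lambda>x. if fst x = i then v else 0) \<in> Aset"
  unfolding Aset_def
  by (rule CollectI, rule exI[of _ "\<lambda>k. if k = i then v else 0"], rule exI[of _ 0]) simp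

lemma RG_add: "f \<in> RG E \<Longrightarrow> g \<in> RG E \<Longrightarrow> fadd f g \<in> RG E"
  unfolding RG_def using Aset_add by (auto simp: fadd_def intro!: mod_add_cong)

lemma RG_mul: "f \<in> RG E \<Longrightarrow> g \<in> RG E \<Longrightarrow> fmul f g \<in> RG E"
  unfolding RG_def using Aset_mul by (auto simp: fmul_def intro!: mod_mult_cong)

lemma mod_neg_cong: "(a::int) mod m = b mod m \<Longrightarrow> (- a) mod m = (- b) mod m"
  by (metis mod_minus_eq)

lemma RG_neg: "f \<in> RG E \<Longrightarrow> fneg f \<in> RG E"
  unfolding RG_def using Aset_neg by (auto simp: fneg_def intro!: mod_neg_cong)

lemma RG_fc: "fc c \<in> RG E"
  unfolding RG_def using Aset_fc by (simp add: fc_def)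

lemma smul_fmul: "smul n f = fmul (fc n) f" by (simp add: smul_def fmul_def fc_def)

lemma RG_smul: "f \<in> RG E \<Longrightarrow> smul n f \<in> RG E"
  by (simp add: smul_fmul RG_mul RG_fc)

lemma RG_e30: "e30 a \<in> RG E"
proof -
  have "{x. e30 a x \<noteq> 0} = {a}" by (auto simp: e30_def)
  then have "e30 a \<in> Aset" by (intro Aset_fin) simp
  then show ?thesis unfolding RG_def by (auto simp: e30_def)
qed

lemma RG_inf: "infinite (RG E)"
proof
  assume "finite (RG E)"
  moreover have "range fc \<subseteq> RG E" using RG_fc by blast
  ultimately have "finite (range fc)" by (rule finite_subset[rotated])
  moreover have "inj fc" by (auto simp: inj_def fc_def dest: fun_cong)
  ultimately show False using finite_imageD by fastforce
qed

definition relm :: "(nat \<times> nat \<Rightarrow> bool) \<Rightarrow> int \<Rightarrow> nat \<times> nat \<Rightarrow> nat \<times> nat \<Rightarrow> bool" where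
  "relm E m a b \<longleftrightarrow> (\<forall>f\<in>RG E. f a mod m = f b mod m)"

lemma rel2: "relm E 2 a b \<longleftrightarrow> fst a = fst b"
proof
  assume r: "relm E 2 a b"
  define w where "w = (\<lambda>x::nat\<times>nat. if fst x = fst a then (15::int) else 0)"
  have "w \<in> RG E" unfolding RG_def w_def using Aset_row by auto
  then have "w a mod 2 = w b mod 2" using r by (auto simp: relm_def)
  then show "fst a = fst b" by (auto simp: w_def split: if_splits)
next
  assume "fst a = fst b"
  then show "relm E 2 a b" unfolding relm_def RG_def by (cases a; cases b) auto
qed

lemma swap_eq_iff: "prod.swap x = a \<longleftrightarrow> x = prod.swap a"
  by (cases x; cases a) auto

lemma even_mod2: "(2::int) dvd n \<Longrightarrow> n mod 2 = 0" by (rule dvd_imp_mod_0)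

lemma rel3: "relm E 3 a b \<longleftrightarrow> b = a \<or> b = prod.swap a"
proof
  assume r: "relm E 3 a b"
  define v where "v = (\<lambda>x::nat\<times>nat. (if x = a then (1::int) else 0) + (if x = prod.swap a then 1 else 0))"
  define w where "w = (\<lambda>x. 10 * v x)"
  have sym: "\<And>x. v (prod.swap x) = v x"
  proof -
    fix x
    have 1: "prod.swap x = a \<longleftrightarrow> x = prod.swap a" by (rule swap_eq_iff)
    have 2: "prod.swap x = prod.swap a \<longleftrightarrow> x = a" using swap_eq_iff[of x "prod.swap a"] by simp
    show "v (prod.swap x) = v x" unfolding v_def 1 2 by simp
  qed
  have "{x. w x \<noteq> 0} \<subseteq> {a, prod.swap a}" by (auto simp: w_def v_def)
  then have A: "w \<in> Aset" by (intro Aset_fin) (rule finite_subset, auto)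
  have m2: "\<And>x. w x mod 2 = 0" unfolding w_def by (rule even_mod2, rule dvd_mult2) simp
  have sw: "\<And>i j. w (i, j) = w (j, i)" using sym unfolding w_def by (metis swap_simp)
  have "w \<in> RG E" unfolding RG_def using A m2 sw by simp
  then have "w a mod 3 = w b mod 3" using r by (auto simp: relm_def)
  then show "b = a \<or> b = prod.swap a"
  proof (rule contrapos_pp)
    assume nb: "\<not> (b = a \<or> b = prod.swap a)"
    then have "w b = 0" by (auto simp: w_def v_def)
    moreover have "w a = 10 \<or> w a = 20" by (auto simp: w_def v_def)
    ultimately show "w a mod 3 \<noteq> w b mod 3" by auto
  qed
next
  assume "b = a \<or> b = prod.swap a"
  then show "relm E 3 a b" unfolding relm_def RG_def by (cases a) auto
qed

lemma rel5: "E \<in> graphs \<Longrightarrow> relm E 5 a b \<longleftrightarrow> b = a \<or> (b = prod.swap a \<and> E a)"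
proof
  assume g: "E \<in> graphs" and r: "relm E 5 a b"
  define v where "v = (\<lambda>x::nat\<times>nat. (if x = a then (1::int) else 0) + (if x = prod.swap a \<and> E a then 1 else 0))"
  define w where "w = (\<lambda>x. 6 * v x)"
  have Es: "\<And>x. E (prod.swap x) = E x" using g by (auto simp: graphs_def)
  have sym: "\<And>x. E x \<Longrightarrow> v (prod.swap x) = v x"
  proof -
    fix x assume ex: "E x"
    have 1: "prod.swap x = a \<longleftrightarrow> x = prod.swap a" by (rule swap_eq_iff)
    have 2: "prod.swap x = prod.swap a \<longleftrightarrow> x = a" using swap_eq_iff[of x "prod.swap a"] by simp
    have 3: "x = prod.swap a \<Longrightarrow> E a" using ex Es by auto
    have 4: "x = a \<Longrightarrow> E a" using ex by simp
    show "v (prod.swap x) = v x" unfolding v_def 1 2 using 3 4 by auto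
  qed
  have "{x. w x \<noteq> 0} \<subseteq> {a, prod.swap a}" by (auto simp: w_def v_def)
  then have A: "w \<in> Aset" by (intro Aset_fin) (rule finite_subset, auto)
  have m2: "\<And>x. w x mod 2 = 0" unfolding w_def by (rule even_mod2, rule dvd_mult2) simp
  have m3: "\<And>x. w x mod 3 = 0" unfolding w_def by (rule dvd_imp_mod_0, rule dvd_mult2) simp
  have sw: "\<And>i j. E (i, j) \<Longrightarrow> w (i, j) = w (j, i)" using sym unfolding w_def by (metis swap_simp)
  have c5: "\<forall>i j. E (i, j) \<longrightarrow> w (i, j) mod 5 = w (j, i) mod 5"
  proof (intro allI impI)
    fix i j assume "E (i, j)"
    then have "w (i, j) = w (j, i)" by (rule sw)
    then show "w (i, j) mod 5 = w (j, i) mod 5" by simp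
  qed
  have "w \<in> RG E" unfolding RG_def using A m2 m3 c5 by simp
  then have "w a mod 5 = w b mod 5" using r by (auto simp: relm_def)
  then show "b = a \<or> (b = prod.swap a \<and> E a)"
  proof (rule contrapos_pp)
    assume nb: "\<not> (b = a \<or> (b = prod.swap a \<and> E a))"
    then have "w b = 0" by (auto simp: w_def v_def)
    moreover have "w a = 6 \<or> w a = 12" by (auto simp: w_def v_def)
    ultimately show "w a mod 5 \<noteq> w b mod 5" by auto
  qed
next
  assume "E \<in> graphs" "b = a \<or> (b = prod.swap a \<and> E a)"
  then show "relm E 5 a b" unfolding relm_def RG_def by (cases a) auto
qed

definition atR :: "(nat \<times> nat \<Rightarrow> bool) \<Rightarrow> (nat \<times> nat \<Rightarrow> int) \<Rightarrow> bool" where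
  "atR E h \<longleftrightarrow> h \<in> RG E \<and> fmul h h = smul 30 h \<and> h \<noteq> fc 0 \<and>
     (\<forall>h'\<in>RG E. fmul h' h' = smul 30 h' \<and> fmul h' h = smul 30 h' \<longrightarrow> h' = fc 0 \<or> h' = h)"

lemma e30_nz: "e30 a \<noteq> fc 0"
proof
  assume "e30 a = fc 0"
  then have "e30 a a = fc 0 a" by simp
  then show False by (simp add: e30_def fc_def)
qed

lemma idem_vals: "fmul h h = smul 30 h \<Longrightarrow> h x = 0 \<or> h x = 30"
proof -
  assume "fmul h h = smul 30 h"
  then have "fmul h h x = smul 30 h x" by simp
  then have "h x * h x = 30 * h x" by (simp add: fmul_def smul_def)
  then show ?thesis by auto
qed

lemma atR_iff: "atR E h \<longleftrightarrow> (\<exists>a. h = e30 a)"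
proof
  assume h: "atR E h"
  then have sq: "fmul h h = smul 30 h" and nz: "h \<noteq> fc 0" and hR: "h \<in> RG E"
    and mn: "\<And>h'. h' \<in> RG E \<Longrightarrow> fmul h' h' = smul 30 h' \<Longrightarrow> fmul h' h = smul 30 h' \<Longrightarrow> h' = fc 0 \<or> h' = h"
    by (auto simp: atR_def)
  have "\<exists>a. h a \<noteq> 0"
  proof (rule ccontr)
    assume "\<not> (\<exists>a. h a \<noteq> 0)"
    then have "h = fc 0" by (auto simp: fc_def)
    then show False using nz by simp
  qed
  then obtain a where a: "h a \<noteq> 0" by blast
  then have ha: "h a = 30" using idem_vals[OF sq] by blast
  have "fmul (e30 a) (e30 a) = smul 30 (e30 a)" by (auto simp: fmul_def smul_def e30_def)
  moreover have "fmul (e30 a) h = smul 30 (e30 a)" using ha by (auto simp: fmul_def smul_def e30_def)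
  moreover have "e30 a \<noteq> fc 0" by (rule e30_nz)
  ultimately have "e30 a = h" using mn[OF RG_e30] by blast
  then show "\<exists>a. h = e30 a" by (intro exI[of _ a]) simp
next
  assume "\<exists>a. h = e30 a"
  then obtain a where a: "h = e30 a" by blast
  show "atR E h" unfolding atR_def
  proof (intro conjI ballI impI)
    show "h \<in> RG E" using a RG_e30 by simp
    show "fmul h h = smul 30 h" using a by (auto simp: fmul_def smul_def e30_def)
    show "h \<noteq> fc 0" using a e30_nz by simp
    fix h' assume h': "h' \<in> RG E" "fmul h' h' = smul 30 h' \<and> fmul h' h = smul 30 h'"
    have z: "\<And>x. x \<noteq> a \<Longrightarrow> h' x = 0"
    proof -
      fix x assume "x \<noteq> a"
      have "fmul h' h x = smul 30 h' x" using h'(2) by simp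
      then have "h' x * h x = 30 * h' x" by (simp add: fmul_def smul_def)
      then show "h' x = 0" using \<open>x \<noteq> a\<close> a by (simp add: e30_def)
    qed
    show "h' = fc 0 \<or> h' = h"
    proof (cases "h' a = 0")
      case True
      have "h' = fc 0"
      proof (rule ext)
        fix x show "h' x = fc 0 x" using z True by (cases "x = a") (auto simp: fc_def)
      qed
      then show ?thesis by simp
    next
      case False then have "h' a = 30" using idem_vals h'(2) by blast
      then have "h' = h" using z a by (auto simp: e30_def)
      then show ?thesis by simp
    qed
  qed
qed

lemma e30_inj: "e30 a = e30 b \<longleftrightarrow> a = b"
proof
  assume "e30 a = e30 b"
  then have "e30 a a = e30 b a" by simp
  then show "a = b" by (auto simp: e30_def split: if_splits)
qed simp



lemma fneg_apply: "fneg f x = - f x" by (simp add: fneg_def)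

locale rhom =
  fixes E1 E2 :: "nat \<times> nat \<Rightarrow> bool" and \<Phi> :: "(nat \<times> nat \<Rightarrow> int) \<Rightarrow> (nat \<times> nat \<Rightarrow> int)"
  assumes bj: "bij_betw \<Phi> (RG E1) (RG E2)"
  and ad: "\<And>f g. f \<in> RG E1 \<Longrightarrow> g \<in> RG E1 \<Longrightarrow> \<Phi> (fadd f g) = fadd (\<Phi> f) (\<Phi> g)"
  and mu: "\<And>f g. f \<in> RG E1 \<Longrightarrow> g \<in> RG E1 \<Longrightarrow> \<Phi> (fmul f g) = fmul (\<Phi> f) (\<Phi> g)"
begin

lemma inR: "f \<in> RG E1 \<Longrightarrow> \<Phi> f \<in> RG E2" using bj bij_betwE by blast
lemma injR: "f \<in> RG E1 \<Longrightarrow> g \<in> RG E1 \<Longrightarrow> \<Phi> f = \<Phi> g \<longleftrightarrow> f = g"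
  using bj by (auto simp: bij_betw_def inj_on_def)
lemma surjR: "h \<in> RG E2 \<Longrightarrow> \<exists>f\<in>RG E1. h = \<Phi> f" using bj by (auto simp: bij_betw_def)

lemma zero: "\<Phi> (fc 0) = fc 0"
proof -
  have z: "fc 0 \<in> RG E1" by (rule RG_fc)
  have "fadd (fc 0) (fc 0) = fc 0" by (simp add: fadd_def fc_def)
  then have "\<Phi> (fc 0) = fadd (\<Phi> (fc 0)) (\<Phi> (fc 0))" using ad[OF z z] by simp
  then have "\<And>x. \<Phi> (fc 0) x = \<Phi> (fc 0) x + \<Phi> (fc 0) x" by (metis fadd_def)
  then show ?thesis unfolding fc_def by (intro ext) simp
qed

lemma neg: "f \<in> RG E1 \<Longrightarrow> \<Phi> (fneg f) = fneg (\<Phi> f)"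
proof -
  assume f: "f \<in> RG E1"
  have "fadd f (fneg f) = fc 0" by (simp add: fadd_def fneg_def fc_def)
  then have "fadd (\<Phi> f) (\<Phi> (fneg f)) = fc 0" using ad[OF f RG_neg[OF f]] zero by simp
  then have e: "\<And>x. \<Phi> f x + \<Phi> (fneg f) x = 0" by (metis fadd_def fc_def)
  show ?thesis
  proof (rule ext)
    fix x
    have "\<Phi> (fneg f) x = - \<Phi> f x" using e[of x] by linarith
    then show "\<Phi> (fneg f) x = fneg (\<Phi> f) x" by (simp add: fneg_apply)
  qed
qed

lemma smul_nat: "f \<in> RG E1 \<Longrightarrow> \<Phi> (smul (int n) f) = smul (int n) (\<Phi> f)"
proof (induction n)
  case 0
  have "smul (int 0) f = fc 0" "smul (int 0) (\<Phi> f) = fc 0" by (simp_all add: smul_def fc_def)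
  then show ?case using zero by simp
next
  case (Suc n)
  have e: "smul (int (Suc n)) f = fadd (smul (int n) f) f" "smul (int (Suc n)) (\<Phi> f) = fadd (smul (int n) (\<Phi> f)) (\<Phi> f)"
    by (simp_all add: smul_def fadd_def algebra_simps)
  show ?case unfolding e using ad[OF RG_smul[OF Suc.prems] Suc.prems] Suc by simp
qed

lemma smul: "f \<in> RG E1 \<Longrightarrow> \<Phi> (smul n f) = smul n (\<Phi> f)"
proof (cases "n \<ge> 0")
  case True
  assume f: "f \<in> RG E1"
  obtain k where "n = int k" using True nonneg_int_cases by blast
  then show ?thesis using smul_nat[OF f] by simp
next
  case False
  assume f: "f \<in> RG E1"
  obtain k where k: "n = - int k" using False by (metis nonpos_int_cases linorder_not_le less_imp_le)
  have e: "smul n f = fneg (smul (int k) f)" "smul n (\<Phi> f) = fneg (smul (int k) (\<Phi> f))"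
    using k by (simp_all add: smul_def fneg_def)
  show ?thesis unfolding e using neg[OF RG_smul[OF f]] smul_nat[OF f] by simp
qed

lemma at: "atR E1 h \<Longrightarrow> atR E2 (\<Phi> h)"
proof -
  assume h: "atR E1 h"
  then have hR: "h \<in> RG E1" and sq: "fmul h h = smul 30 h" and nz: "h \<noteq> fc 0"
    and mn: "\<And>h'. h' \<in> RG E1 \<Longrightarrow> fmul h' h' = smul 30 h' \<Longrightarrow> fmul h' h = smul 30 h' \<Longrightarrow> h' = fc 0 \<or> h' = h"
    by (auto simp: atR_def)
  show "atR E2 (\<Phi> h)" unfolding atR_def
  proof (intro conjI ballI impI)
    show "\<Phi> h \<in> RG E2" using inR[OF hR] .
    show "fmul (\<Phi> h) (\<Phi> h) = smul 30 (\<Phi> h)" using mu[OF hR hR] sq smul[OF hR] by simp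
    show "\<Phi> h \<noteq> fc 0"
    proof
      assume "\<Phi> h = fc 0"
      then have "\<Phi> h = \<Phi> (fc 0)" using zero by simp
      then have "h = fc 0" using injR[OF hR RG_fc] by simp
      with nz show False by simp
    qed
    fix h' assume h': "h' \<in> RG E2" "fmul h' h' = smul 30 h' \<and> fmul h' (\<Phi> h) = smul 30 h'"
    obtain g where g: "g \<in> RG E1" "h' = \<Phi> g" using surjR[OF h'(1)] by blast
    have "\<Phi> (fmul g g) = \<Phi> (smul 30 g)" using h'(2) g mu[OF g(1) g(1)] smul[OF g(1)] by simp
    then have 1: "fmul g g = smul 30 g" using injR[OF RG_mul[OF g(1) g(1)] RG_smul[OF g(1)]] by simp
    have "\<Phi> (fmul g h) = \<Phi> (smul 30 g)" using h'(2) g mu[OF g(1) hR] smul[OF g(1)] by simp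
    then have 2: "fmul g h = smul 30 g" using injR[OF RG_mul[OF g(1) hR] RG_smul[OF g(1)]] by simp
    have "g = fc 0 \<or> g = h" using mn[OF g(1) 1 2] .
    then show "h' = fc 0 \<or> h' = \<Phi> h" using g zero by auto
  qed
qed

lemma inv_rhom: "rhom E2 E1 (inv_into (RG E1) \<Phi>)"
proof
  show b: "bij_betw (inv_into (RG E1) \<Phi>) (RG E2) (RG E1)" using bij_betw_inv_into[OF bj] .
  have fi: "\<And>h. h \<in> RG E2 \<Longrightarrow> \<Phi> (inv_into (RG E1) \<Phi> h) = h" using bj by (simp add: bij_betw_inv_into_right)
  have ii: "\<And>h. h \<in> RG E2 \<Longrightarrow> inv_into (RG E1) \<Phi> h \<in> RG E1" using b bij_betwE by blast
  have li: "\<And>f. f \<in> RG E1 \<Longrightarrow> inv_into (RG E1) \<Phi> (\<Phi> f) = f" using bj by (simp add: bij_betw_inv_into_left)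
  fix f g assume f: "f \<in> RG E2" and g: "g \<in> RG E2"
  have "\<Phi> (fadd (inv_into (RG E1) \<Phi> f) (inv_into (RG E1) \<Phi> g)) = fadd f g"
    using ad[OF ii[OF f] ii[OF g]] fi f g by simp
  then show "inv_into (RG E1) \<Phi> (fadd f g) = fadd (inv_into (RG E1) \<Phi> f) (inv_into (RG E1) \<Phi> g)"
    using li[OF RG_add[OF ii[OF f] ii[OF g]]] by metis
  have "\<Phi> (fmul (inv_into (RG E1) \<Phi> f) (inv_into (RG E1) \<Phi> g)) = fmul f g"
    using mu[OF ii[OF f] ii[OF g]] fi f g by simp
  then show "inv_into (RG E1) \<Phi> (fmul f g) = fmul (inv_into (RG E1) \<Phi> f) (inv_into (RG E1) \<Phi> g)"
    using li[OF RG_mul[OF ii[OF f] ii[OF g]]] by metis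
qed

end



lemma graph_sym': "E \<in> graphs \<Longrightarrow> E (i, j) = E (j, i)" by (simp add: graphs_def)
lemma graph_irr': "E \<in> graphs \<Longrightarrow> \<not> E (i, i)" by (simp add: graphs_def)

lemma (in rhom) rigid:
  assumes g1: "E1 \<in> graphs" and g2: "E2 \<in> graphs"
  shows "\<exists>\<pi>. bij \<pi> \<and> (\<forall>i j. E1 (i, j) \<longleftrightarrow> E2 (\<pi> i, \<pi> j)) \<and>
     (\<forall>f\<in>RG E1. \<Phi> f = (\<lambda>x. f (map_prod (inv_into UNIV \<pi>) (inv_into UNIV \<pi>) x)))"
proof -
  interpret I: rhom E2 E1 "inv_into (RG E1) \<Phi>" by (rule inv_rhom)
  have li: "\<And>f. f \<in> RG E1 \<Longrightarrow> inv_into (RG E1) \<Phi> (\<Phi> f) = f" using bj by (simp add: bij_betw_inv_into_left)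
  have atiff: "\<And>h. h \<in> RG E1 \<Longrightarrow> atR E1 h \<longleftrightarrow> atR E2 (\<Phi> h)"
  proof
    fix h assume "atR E1 h" then show "atR E2 (\<Phi> h)" by (rule at)
  next
    fix h assume h: "h \<in> RG E1" and "atR E2 (\<Phi> h)"
    then have "atR E1 (inv_into (RG E1) \<Phi> (\<Phi> h))" by (intro I.at)
    then show "atR E1 h" using li[OF h] by simp
  qed
  define \<sigma> where "\<sigma> a = (SOME b. \<Phi> (e30 a) = e30 b)" for a
  have Pe: "\<And>a. \<Phi> (e30 a) = e30 (\<sigma> a)"
  proof -
    fix a
    have "atR E1 (e30 a)" using atR_iff by blast
    then have "atR E2 (\<Phi> (e30 a))" using at by blast
    then obtain b where "\<Phi> (e30 a) = e30 b" using atR_iff by blast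
    then show "\<Phi> (e30 a) = e30 (\<sigma> a)" unfolding \<sigma>_def using someI[of "\<lambda>b. \<Phi> (e30 a) = e30 b" b] by simp
  qed
  have \<sigma>inj: "\<And>a b. \<sigma> a = \<sigma> b \<longleftrightarrow> a = b"
  proof
    fix a b assume "\<sigma> a = \<sigma> b"
    then have "\<Phi> (e30 a) = \<Phi> (e30 b)" using Pe by simp
    then show "a = b" using injR[OF RG_e30 RG_e30] e30_inj by blast
  qed simp
  have \<sigma>surj: "\<And>b. \<exists>a. b = \<sigma> a"
  proof -
    fix b
    obtain f where f: "f \<in> RG E1" "e30 b = \<Phi> f" using surjR[OF RG_e30] by blast
    have "atR E2 (\<Phi> f)" unfolding f(2)[symmetric] atR_iff by blast
    then have "atR E1 f" using atiff[OF f(1)] by simp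
    then obtain a where "f = e30 a" using atR_iff by blast
    then have "e30 b = e30 (\<sigma> a)" using f(2) Pe by simp
    then show "\<exists>a. b = \<sigma> a" using e30_inj by blast
  qed
  have val: "\<And>f a. f \<in> RG E1 \<Longrightarrow> \<Phi> f (\<sigma> a) = f a"
  proof -
    fix f a assume f: "f \<in> RG E1"
    have e: "fmul f (e30 a) = smul (f a) (e30 a)" by (auto simp: fmul_def smul_def e30_def)
    have "fmul (\<Phi> f) (e30 (\<sigma> a)) = \<Phi> (fmul f (e30 a))" using mu[OF f RG_e30] Pe by simp
    also have "\<dots> = \<Phi> (smul (f a) (e30 a))" using e by simp
    also have "\<dots> = smul (f a) (e30 (\<sigma> a))" using smul[OF RG_e30] Pe by simp
    finally have "fmul (\<Phi> f) (e30 (\<sigma> a)) = smul (f a) (e30 (\<sigma> a))" .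
    then have "fmul (\<Phi> f) (e30 (\<sigma> a)) (\<sigma> a) = smul (f a) (e30 (\<sigma> a)) (\<sigma> a)" by simp
    then show "\<Phi> f (\<sigma> a) = f a" by (simp add: fmul_def smul_def e30_def)
  qed
  have relT: "\<And>m a b. relm E1 m a b \<longleftrightarrow> relm E2 m (\<sigma> a) (\<sigma> b)"
  proof
    fix m a b assume r: "relm E1 m a b"
    show "relm E2 m (\<sigma> a) (\<sigma> b)" unfolding relm_def
    proof
      fix g assume "g \<in> RG E2"
      then obtain f where f: "f \<in> RG E1" "g = \<Phi> f" using surjR by blast
      have "f a mod m = f b mod m" using r f(1) unfolding relm_def by blast
      then show "g (\<sigma> a) mod m = g (\<sigma> b) mod m" using f(2) val[OF f(1)] by simp
    qed
  next
    fix m a b assume r: "relm E2 m (\<sigma> a) (\<sigma> b)"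
    show "relm E1 m a b" unfolding relm_def
    proof
      fix f assume f: "f \<in> RG E1"
      have "\<Phi> f (\<sigma> a) mod m = \<Phi> f (\<sigma> b) mod m" using r inR[OF f] unfolding relm_def by blast
      then show "f a mod m = f b mod m" using val[OF f] by simp
    qed
  qed
  define \<pi> where "\<pi> i = fst (\<sigma> (i, 0))" for i
  have fst\<sigma>: "\<And>i j. fst (\<sigma> (i, j)) = \<pi> i"
  proof -
    fix i j :: nat
    have "relm E1 2 (i, j) (i, 0)" using rel2 by simp
    then have "relm E2 2 (\<sigma> (i, j)) (\<sigma> (i, 0))" using relT[of 2 "(i, j)" "(i, 0)"] by blast
    then show "fst (\<sigma> (i, j)) = \<pi> i" using rel2[of E2 "\<sigma> (i, j)" "\<sigma> (i, 0)"] \<pi>_def by simp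
  qed
  have diag: "\<And>i. \<sigma> (i, i) = (\<pi> i, \<pi> i)"
  proof -
    fix i :: nat
    define s where "s = \<sigma> (i, i)"
    obtain z where z: "prod.swap s = \<sigma> z" using \<sigma>surj by blast
    have "relm E2 3 s (prod.swap s)" using rel3[of E2 s "prod.swap s"] by simp
    then have "relm E2 3 (\<sigma> (i, i)) (\<sigma> z)" using z s_def by simp
    then have "relm E1 3 (i, i) z" using relT[of 3 "(i, i)" z] by blast
    then have "z = (i, i)" using rel3[of E1 "(i, i)" z] by auto
    then have "prod.swap s = s" using z s_def by simp
    obtain p q where pq: "s = (p, q)" by fastforce
    from \<open>prod.swap s = s\<close> have "prod.swap (p, q) = (p, q)" unfolding pq .
    then have "(q, p) = (p, q)" by (simp only: swap_simp)
    then have "q = p \<and> p = q" by (rule iffD1[OF prod.inject])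
    then have "q = p" by (rule conjunct1)
    moreover have "p = \<pi> i"
    proof -
      have "fst s = \<pi> i" using fst\<sigma>[of i i] unfolding s_def .
      then show "p = \<pi> i" unfolding pq by simp
    qed
    ultimately have "s = (\<pi> i, \<pi> i)" using pq by simp
    then show "\<sigma> (i, i) = (\<pi> i, \<pi> i)" using s_def by simp
  qed
  have off: "\<And>i j. \<sigma> (i, j) = (\<pi> i, \<pi> j)"
  proof -
    fix i j :: nat
    show "\<sigma> (i, j) = (\<pi> i, \<pi> j)"
    proof (cases "i = j")
      case True then show ?thesis using diag by simp
    next
      case False
      have "relm E1 3 (i, j) (j, i)" using rel3[of E1 "(i, j)" "(j, i)"] by simp
      then have "relm E2 3 (\<sigma> (i, j)) (\<sigma> (j, i))" using relT[of 3 "(i, j)" "(j, i)"] by blast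
      then have "\<sigma> (j, i) = \<sigma> (i, j) \<or> \<sigma> (j, i) = prod.swap (\<sigma> (i, j))" using rel3[of E2 "\<sigma> (i, j)" "\<sigma> (j, i)"] by blast
      moreover have "\<sigma> (j, i) \<noteq> \<sigma> (i, j)" using \<sigma>inj False by simp
      ultimately have sw: "\<sigma> (j, i) = prod.swap (\<sigma> (i, j))" by blast
      obtain p q where pq: "\<sigma> (i, j) = (p, q)" by fastforce
      have "fst (\<sigma> (j, i)) = q" unfolding sw pq by simp
      then have "q = \<pi> j" using fst\<sigma>[of j i] by simp
      moreover have "p = \<pi> i" using fst\<sigma>[of i j] unfolding pq by simp
      ultimately show ?thesis using pq by simp
    qed
  qed
  have \<pi>inj: "inj \<pi>"
  proof (rule injI)
    fix i j assume "\<pi> i = \<pi> j"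
    then have "\<sigma> (i, i) = \<sigma> (j, j)" using diag by simp
    then show "i = j" using \<sigma>inj by simp
  qed
  have \<pi>surj: "surj \<pi>"
  proof -
    { fix y
      obtain z where z: "(y, y) = \<sigma> z" using \<sigma>surj by blast
      obtain p q where "z = (p, q)" by fastforce
      then have "y = \<pi> p" using z off by simp
      then have "y \<in> range \<pi>" by simp }
    then show ?thesis by blast
  qed
  have bpi: "bij \<pi>" using \<pi>inj \<pi>surj by (simp add: bij_def)
  have edges: "\<forall>i j. E1 (i, j) \<longleftrightarrow> E2 (\<pi> i, \<pi> j)"
  proof (intro allI)
    fix i j :: nat
    show "E1 (i, j) \<longleftrightarrow> E2 (\<pi> i, \<pi> j)"
    proof (cases "i = j")
      case True then show ?thesis using graph_irr'[OF g1] graph_irr'[OF g2] by simp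
    next
      case False
      have pn: "\<pi> i \<noteq> \<pi> j" using False \<pi>inj by (simp add: inj_eq)
      have "E1 (i, j) \<longleftrightarrow> relm E1 5 (i, j) (j, i)" using rel5[OF g1, of "(i, j)" "(j, i)"] False by auto
      also have "\<dots> \<longleftrightarrow> relm E2 5 (\<sigma> (i, j)) (\<sigma> (j, i))" by (rule relT)
      also have "\<dots> \<longleftrightarrow> relm E2 5 (\<pi> i, \<pi> j) (\<pi> j, \<pi> i)" using off by simp
      also have "\<dots> \<longleftrightarrow> E2 (\<pi> i, \<pi> j)" using rel5[OF g2, of "(\<pi> i, \<pi> j)" "(\<pi> j, \<pi> i)"] pn by auto
      finally show ?thesis .
    qed
  qed
  have form: "\<forall>f\<in>RG E1. \<Phi> f = (\<lambda>x. f (map_prod (inv_into UNIV \<pi>) (inv_into UNIV \<pi>) x))"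
  proof (intro ballI ext)
    fix f y assume f: "f \<in> RG E1"
    obtain a b :: nat where y: "y = (a, b)" by fastforce
    have "\<sigma> (inv_into UNIV \<pi> a, inv_into UNIV \<pi> b) = y"
      using off y \<pi>surj by (simp add: surj_f_inv_f)
    then have "\<Phi> f y = \<Phi> f (\<sigma> (inv_into UNIV \<pi> a, inv_into UNIV \<pi> b))" by simp
    also have "\<dots> = f (inv_into UNIV \<pi> a, inv_into UNIV \<pi> b)" using val[OF f] .
    finally have "\<Phi> f y = f (inv_into UNIV \<pi> a, inv_into UNIV \<pi> b)" .
    then show "\<Phi> f y = f (map_prod (inv_into UNIV \<pi>) (inv_into UNIV \<pi>) y)" using y by simp
  qed
  show ?thesis using bpi edges form by blast
qed



lemma map_of_map_pair: "map_of (map (\<lambda>x. (x, h x)) l) x = (if x \<in> set l then Some (h x) else None)"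
  by (induction l) auto

definition encA :: "int \<times> (nat \<times> int) list \<times> ((nat \<times> nat) \<times> int) list \<Rightarrow> (nat \<times> nat \<Rightarrow> int)" where
  "encA t = (\<lambda>x. case map_of (snd (snd t)) x of Some v \<Rightarrow> v
      | None \<Rightarrow> (case map_of (fst (snd t)) (fst x) of Some v \<Rightarrow> v | None \<Rightarrow> fst t))"

lemma Aset_sub: "Aset \<subseteq> range encA"
proof
  fix f assume "f \<in> Aset"
  then obtain d c where F: "finite {i. d i \<noteq> c}" and G: "finite {x. f x \<noteq> d (fst x)}" by (auto simp: Aset_def)
  obtain lF where lF: "set lF = {i. d i \<noteq> c}" using finite_list[OF F] by blast
  obtain lG where lG: "set lG = {x. f x \<noteq> d (fst x)}" using finite_list[OF G] by blast
  have "encA (c, map (\<lambda>i. (i, d i)) lF, map (\<lambda>x. (x, f x)) lG) = f"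
  proof
    fix x
    show "encA (c, map (\<lambda>i. (i, d i)) lF, map (\<lambda>x. (x, f x)) lG) x = f x"
      unfolding encA_def using lF lG by (auto simp: map_of_map_pair)
  qed
  then show "f \<in> range encA" by (metis rangeI)
qed

lemma Aset_countable: "countable Aset"
  by (rule countable_subset[OF Aset_sub]) simp

lemma RG_sub: "RG E \<subseteq> Aset" by (auto simp: RG_def)

lemma Aset_inf: "infinite Aset"
  using RG_inf[of "\<lambda>_. False"] RG_sub infinite_super by blast

definition aA :: "nat \<Rightarrow> (nat \<times> nat \<Rightarrow> int)" where "aA = from_nat_into Aset"

lemma aA_bij: "bij_betw aA UNIV Aset"
  unfolding aA_def by (rule bij_betw_from_nat_into[OF Aset_countable Aset_inf])

definition SE :: "(nat \<times> nat \<Rightarrow> bool) \<Rightarrow> nat set" where "SE E = {n. aA n \<in> RG E}"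

lemma aA_SE: "bij_betw aA (SE E) (RG E)"
proof -
  have "inj_on aA (SE E)" using aA_bij by (auto simp: bij_betw_def inj_on_def)
  moreover have "aA ` SE E = RG E"
  proof
    show "aA ` SE E \<subseteq> RG E" by (auto simp: SE_def)
    show "RG E \<subseteq> aA ` SE E"
    proof
      fix f assume f: "f \<in> RG E"
      then have "f \<in> Aset" using RG_sub by blast
      then obtain n where "f = aA n" using aA_bij by (auto simp: bij_betw_def)
      then show "f \<in> aA ` SE E" using f by (auto simp: SE_def)
    qed
  qed
  ultimately show ?thesis by (simp add: bij_betw_def)
qed

lemma SE_inf: "infinite (SE E)"
  using aA_SE RG_inf bij_betw_finite by blast

definition enum :: "(nat \<times> nat \<Rightarrow> bool) \<Rightarrow> nat \<Rightarrow> nat" where "enum E = enumerate (SE E)"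
definition eR :: "(nat \<times> nat \<Rightarrow> bool) \<Rightarrow> nat \<Rightarrow> (nat \<times> nat \<Rightarrow> int)" where "eR E = aA \<circ> enum E"
definition einv :: "(nat \<times> nat \<Rightarrow> bool) \<Rightarrow> (nat \<times> nat \<Rightarrow> int) \<Rightarrow> nat" where "einv E = inv_into UNIV (eR E)"

lemma eR_bij: "bij_betw (eR E) UNIV (RG E)"
  unfolding eR_def enum_def by (rule bij_betw_trans[OF bij_enumerate[OF SE_inf] aA_SE])

lemma eR_in: "eR E n \<in> RG E" using eR_bij bij_betwE by blast
lemma eR_einv: "f \<in> RG E \<Longrightarrow> eR E (einv E f) = f"
  unfolding einv_def using eR_bij by (meson bij_betw_inv_into_right)
lemma einv_eR: "einv E (eR E n) = n"
  unfolding einv_def using bij_betw_imp_inj_on[OF eR_bij] by (simp add: inv_into_f_f)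
lemma einv_bij: "bij_betw (einv E) (RG E) UNIV"
  unfolding einv_def by (rule bij_betw_inv_into[OF eR_bij])

definition fR :: "(nat \<times> nat \<Rightarrow> bool) \<Rightarrow> (nat \<times> nat \<Rightarrow> nat) \<times> (nat \<times> nat \<Rightarrow> nat)" where
  "fR E = ((\<lambda>(n, m). einv E (fadd (eR E n) (eR E m))), (\<lambda>(n, m). einv E (fmul (eR E n) (eR E m))))"

lemma eR_P: "eR E (fst (fR E) (a, b)) = fadd (eR E a) (eR E b)"
  by (simp add: fR_def eR_einv RG_add eR_in)
lemma eR_M: "eR E (snd (fR E) (a, b)) = fmul (eR E a) (eR E b)"
  by (simp add: fR_def eR_einv RG_mul eR_in)

lemma eR_inj: "eR E a = eR E b \<Longrightarrow> a = b" by (metis einv_eR)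

lemma fR_ring: "fR E \<in> unital_rings"
proof -
  define p where "p = fst (fR E)"
  define m where "m = snd (fR E)"
  have fr: "fR E = (p, m)" by (simp add: p_def m_def)
  have P: "\<And>a b. eR E (p (a, b)) = fadd (eR E a) (eR E b)" unfolding p_def by (rule eR_P)
  have M: "\<And>a b. eR E (m (a, b)) = fmul (eR E a) (eR E b)" unfolding m_def by (rule eR_M)
  define z where "z = einv E (fc 0)"
  define u where "u = einv E (fc 1)"
  have Z: "eR E z = fc 0" unfolding z_def by (simp add: eR_einv RG_fc)
  have U: "eR E u = fc 1" unfolding u_def by (simp add: eR_einv RG_fc)
  have N: "\<And>a. eR E (einv E (fneg (eR E a))) = fneg (eR E a)" by (simp add: eR_einv RG_neg eR_in)
  show ?thesis unfolding fr unital_rings_def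
  proof (simp only: mem_Collect_eq prod.case, intro conjI allI)
    fix a b c
    show "p (p (a, b), c) = p (a, p (b, c))" by (rule eR_inj[of E]) (simp add: P fadd_def add.assoc)
    show "p (a, b) = p (b, a)" by (rule eR_inj[of E]) (simp add: P fadd_def add.commute)
    show "m (m (a, b), c) = m (a, m (b, c))" by (rule eR_inj[of E]) (simp add: M fmul_def mult.assoc)
    show "m (a, p (b, c)) = p (m (a, b), m (a, c))" by (rule eR_inj[of E]) (simp add: P M fadd_def fmul_def distrib_left)
    show "m (p (a, b), c) = p (m (a, c), m (b, c))" by (rule eR_inj[of E]) (simp add: P M fadd_def fmul_def distrib_right)
  next
    show "\<exists>z. (\<forall>a. p (z, a) = a) \<and> (\<forall>a. \<exists>b. p (a, b) = z)"
    proof (intro exI conjI allI)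
      fix a show "p (z, a) = a" by (rule eR_inj[of E]) (simp add: P Z fadd_def fc_def)
    next
      fix a show "p (a, einv E (fneg (eR E a))) = z" by (rule eR_inj[of E]) (simp only: P Z N, simp add: fadd_def fc_def fneg_def)
    qed
  next
    show "\<exists>u. \<forall>a. m (u, a) = a \<and> m (a, u) = a"
    proof (intro exI allI conjI)
      fix a
      show "m (u, a) = a" by (rule eR_inj[of E]) (simp add: M U fmul_def fc_def)
      show "m (a, u) = a" by (rule eR_inj[of E]) (simp add: M U fmul_def fc_def)
    qed
  qed
qed



definition trf :: "(nat \<Rightarrow> nat) \<Rightarrow> (nat \<times> nat \<Rightarrow> int) \<Rightarrow> (nat \<times> nat \<Rightarrow> int)" where
  "trf \<pi> f = (\<lambda>x. f (map_prod (inv_into UNIV \<pi>) (inv_into UNIV \<pi>) x))"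

lemma RG_comp:
  assumes b: "bij \<rho>" and e: "\<forall>i j. E2 (i, j) \<longrightarrow> E1 (\<rho> i, \<rho> j)" and f: "f \<in> RG E1"
  shows "(\<lambda>x. f (map_prod \<rho> \<rho> x)) \<in> RG E2"
proof -
  have inj: "inj \<rho>" using b by (simp add: bij_is_inj)
  have injm: "inj (map_prod \<rho> \<rho>)" using map_prod_inj_on[OF inj inj] by simp
  obtain d c where F: "finite {i. d i \<noteq> c}" and G: "finite {x. f x \<noteq> d (fst x)}"
    using f by (auto simp: RG_def Aset_def)
  have F': "finite {i. d (\<rho> i) \<noteq> c}"
    using finite_vimageI[OF F inj] by (simp add: vimage_def)
  have G': "finite {x. f (map_prod \<rho> \<rho> x) \<noteq> d (\<rho> (fst x))}"
  proof -
    have "{x. f (map_prod \<rho> \<rho> x) \<noteq> d (\<rho> (fst x))} = map_prod \<rho> \<rho> -` {x. f x \<noteq> d (fst x)}"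
      by (auto simp: map_prod_def split: prod.splits)
    then show ?thesis using finite_vimageI[OF G injm] by simp
  qed
  have A: "(\<lambda>x. f (map_prod \<rho> \<rho> x)) \<in> Aset" unfolding Aset_def
    by (rule CollectI, rule exI[of _ "\<lambda>i. d (\<rho> i)"], rule exI[of _ c]) (use F' G' in simp)
  have m5: "\<forall>i j. E2 (i, j) \<longrightarrow> f (\<rho> i, \<rho> j) mod 5 = f (\<rho> j, \<rho> i) mod 5"
  proof (intro allI impI)
    fix i j assume "E2 (i, j)"
    then have "E1 (\<rho> i, \<rho> j)" using e by blast
    then show "f (\<rho> i, \<rho> j) mod 5 = f (\<rho> j, \<rho> i) mod 5" using f unfolding RG_def by blast
  qed
  show ?thesis using A f m5 unfolding RG_def by auto
qed

lemma iso_inv: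
  assumes "bij \<pi>" "\<forall>i j. E1 (i, j) \<longleftrightarrow> E2 (\<pi> i, \<pi> j)"
  shows "\<forall>i j. E2 (i, j) \<longrightarrow> E1 (inv_into UNIV \<pi> i, inv_into UNIV \<pi> j)"
  using assms by (simp add: bij_is_surj surj_f_inv_f)

lemma iso_inv2:
  assumes "bij \<pi>" "\<forall>i j. E1 (i, j) \<longleftrightarrow> E2 (\<pi> i, \<pi> j)"
  shows "\<forall>i j. E2 (i, j) \<longleftrightarrow> E1 (inv_into UNIV \<pi> i, inv_into UNIV \<pi> j)"
  using assms by (simp add: bij_is_surj surj_f_inv_f)

lemma trf_RG:
  assumes "bij \<pi>" "\<forall>i j. E1 (i, j) \<longleftrightarrow> E2 (\<pi> i, \<pi> j)" "f \<in> RG E1"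
  shows "trf \<pi> f \<in> RG E2"
  unfolding trf_def
  by (rule RG_comp[OF bij_imp_bij_inv[OF assms(1)] iso_inv[OF assms(1,2)] assms(3)])

lemma trf_inv: "bij \<pi> \<Longrightarrow> trf (inv_into UNIV \<pi>) (trf \<pi> f) = f"
proof (rule ext)
  fix x :: "nat \<times> nat"
  assume b: "bij \<pi>"
  obtain a c where x: "x = (a, c)" by fastforce
  have ii: "inv_into UNIV (inv_into UNIV \<pi>) = \<pi>" using b by (simp add: inv_inv_eq)
  show "trf (inv_into UNIV \<pi>) (trf \<pi> f) x = f x"
    unfolding trf_def ii x using b by (simp add: bij_is_inj)
qed

lemma trf_bij:
  assumes b: "bij \<pi>" and e: "\<forall>i j. E1 (i, j) \<longleftrightarrow> E2 (\<pi> i, \<pi> j)"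
  shows "bij_betw (trf \<pi>) (RG E1) (RG E2)"
proof (rule bij_betw_byWitness[where f'="trf (inv_into UNIV \<pi>)"])
  have bi: "bij (inv_into UNIV \<pi>)" using b by (rule bij_imp_bij_inv)
  have ii: "inv_into UNIV (inv_into UNIV \<pi>) = \<pi>" using b by (simp add: inv_inv_eq)
  show "\<forall>a\<in>RG E1. trf (inv_into UNIV \<pi>) (trf \<pi> a) = a" using trf_inv[OF b] by simp
  show "\<forall>a\<in>RG E2. trf \<pi> (trf (inv_into UNIV \<pi>) a) = a" using trf_inv[OF bi] ii by simp
  show "trf \<pi> ` RG E1 \<subseteq> RG E2" using trf_RG[OF b e] by blast
  show "trf (inv_into UNIV \<pi>) ` RG E2 \<subseteq> RG E1" using trf_RG[OF bi iso_inv2[OF b e]] by blast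
qed

lemma trf_add: "trf \<pi> (fadd f g) = fadd (trf \<pi> f) (trf \<pi> g)" by (simp add: trf_def fadd_def)
lemma trf_mul: "trf \<pi> (fmul f g) = fmul (trf \<pi> f) (trf \<pi> g)" by (simp add: trf_def fmul_def)

definition liftR :: "(nat \<times> nat \<Rightarrow> bool) \<Rightarrow> (nat \<times> nat \<Rightarrow> bool) \<Rightarrow> (nat \<Rightarrow> nat) \<Rightarrow> nat \<Rightarrow> nat" where
  "liftR E1 E2 \<pi> n = einv E2 (trf \<pi> (eR E1 n))"

lemma R_L1:
  assumes g: "x \<in> graphs" "y \<in> graphs" and r: "rel_preserving x y \<pi>"
  shows "ring_preserving (fR x) (fR y) (liftR x y \<pi>)"
proof -
  have b: "bij \<pi>" and e: "\<forall>i j. x (i, j) \<longleftrightarrow> y (\<pi> i, \<pi> j)" using r by (auto simp: rel_preserving_def)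
  have bl: "bij (liftR x y \<pi>)"
  proof -
    have "bij_betw (einv y \<circ> (trf \<pi> \<circ> eR x)) UNIV UNIV"
      by (rule bij_betw_trans[OF bij_betw_trans[OF eR_bij trf_bij[OF b e]] einv_bij])
    moreover have "einv y \<circ> (trf \<pi> \<circ> eR x) = liftR x y \<pi>" by (auto simp: liftR_def)
    ultimately show ?thesis by simp
  qed
  have inR: "\<And>n. trf \<pi> (eR x n) \<in> RG y" using trf_RG[OF b e eR_in] .
  have el: "\<And>n. eR y (liftR x y \<pi> n) = trf \<pi> (eR x n)" by (simp add: liftR_def eR_einv inR)
  show ?thesis unfolding ring_preserving_def op_preserving_def
  proof (intro conjI allI bl)
    fix a b
    show "liftR x y \<pi> (fst (fR x) (a, b)) = fst (fR y) (liftR x y \<pi> a, liftR x y \<pi> b)"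
      by (rule eR_inj[of y]) (simp only: el eR_P trf_add)
    show "liftR x y \<pi> (snd (fR x) (a, b)) = snd (fR y) (liftR x y \<pi> a, liftR x y \<pi> b)"
      by (rule eR_inj[of y]) (simp only: el eR_M trf_mul)
  qed
qed

lemma R_L2:
  assumes g: "x \<in> graphs" "y \<in> graphs" and r: "ring_preserving (fR x) (fR y) \<psi>"
  shows "\<exists>\<pi>. rel_preserving x y \<pi> \<and> \<psi> = liftR x y \<pi>"
proof -
  have b: "bij \<psi>" and pa: "\<And>a b. \<psi> (fst (fR x) (a, b)) = fst (fR y) (\<psi> a, \<psi> b)"
    and pm: "\<And>a b. \<psi> (snd (fR x) (a, b)) = snd (fR y) (\<psi> a, \<psi> b)"
    using r by (auto simp: ring_preserving_def op_preserving_def)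
  define \<Phi> where "\<Phi> f = eR y (\<psi> (einv x f))" for f
  have "rhom x y \<Phi>"
  proof
    have "bij_betw (eR y \<circ> (\<psi> \<circ> einv x)) (RG x) (RG y)"
      by (rule bij_betw_trans[OF bij_betw_trans[OF einv_bij b] eR_bij])
    moreover have "eR y \<circ> (\<psi> \<circ> einv x) = \<Phi>" by (rule ext) (simp add: \<Phi>_def)
    ultimately show "bij_betw \<Phi> (RG x) (RG y)" by simp
  next
    fix f g assume f: "f \<in> RG x" and gg: "g \<in> RG x"
    have "fst (fR x) (einv x f, einv x g) = einv x (fadd f g)" by (simp add: fR_def eR_einv f gg)
    then have "\<Phi> (fadd f g) = eR y (fst (fR y) (\<psi> (einv x f), \<psi> (einv x g)))"
      unfolding \<Phi>_def using pa by metis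
    then show "\<Phi> (fadd f g) = fadd (\<Phi> f) (\<Phi> g)" by (simp add: eR_P \<Phi>_def)
  next
    fix f g assume f: "f \<in> RG x" and gg: "g \<in> RG x"
    have "snd (fR x) (einv x f, einv x g) = einv x (fmul f g)" by (simp add: fR_def eR_einv f gg)
    then have "\<Phi> (fmul f g) = eR y (snd (fR y) (\<psi> (einv x f), \<psi> (einv x g)))"
      unfolding \<Phi>_def using pm by metis
    then show "\<Phi> (fmul f g) = fmul (\<Phi> f) (\<Phi> g)" by (simp add: eR_M \<Phi>_def)
  qed
  then obtain \<pi> where p: "bij \<pi>" "\<forall>i j. x (i, j) \<longleftrightarrow> y (\<pi> i, \<pi> j)"
    "\<forall>f\<in>RG x. \<Phi> f = (\<lambda>z. f (map_prod (inv_into UNIV \<pi>) (inv_into UNIV \<pi>) z))"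
    using rhom.rigid g by blast
  have "\<psi> = liftR x y \<pi>"
  proof
    fix n
    have "\<Phi> (eR x n) = eR y (\<psi> n)" by (simp add: \<Phi>_def einv_eR)
    then have "eR y (\<psi> n) = trf \<pi> (eR x n)" using p(3) eR_in unfolding trf_def by metis
    then have "einv y (eR y (\<psi> n)) = einv y (trf \<pi> (eR x n))" by simp
    then show "\<psi> n = liftR x y \<pi> n" by (simp add: einv_eR liftR_def)
  qed
  then show ?thesis using p by (auto simp: rel_preserving_def)
qed

lemma trf_comp: "bij \<pi> \<Longrightarrow> bij \<rho> \<Longrightarrow> trf (\<pi> \<circ> \<rho>) f = trf \<pi> (trf \<rho> f)"
  unfolding trf_def by (simp add: o_inv_distrib map_prod_def split_def)

lemma R_L3:
  assumes "rel_preserving x x \<pi>" "rel_preserving x x \<rho>"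
  shows "liftR x x (\<pi> \<circ> \<rho>) = liftR x x \<pi> \<circ> liftR x x \<rho>"
proof (rule ext)
  fix n
  have b: "bij \<pi>" "bij \<rho>" and e: "\<forall>i j. x (i, j) \<longleftrightarrow> x (\<rho> i, \<rho> j)" using assms by (auto simp: rel_preserving_def)
  have m: "trf \<rho> (eR x n) \<in> RG x" using trf_RG[OF b(2) e eR_in] .
  show "liftR x x (\<pi> \<circ> \<rho>) n = (liftR x x \<pi> \<circ> liftR x x \<rho>) n"
    by (simp add: liftR_def trf_comp[OF b] eR_einv[OF m])
qed

lemma R_L4:
  assumes "rel_preserving x x \<pi>" "rel_preserving x x \<rho>" "liftR x x \<pi> = liftR x x \<rho>"
  shows "\<pi> = \<rho>"
proof
  fix i
  have b: "bij \<pi>" "bij \<rho>" and e: "\<forall>i j. x (i, j) \<longleftrightarrow> x (\<pi> i, \<pi> j)" "\<forall>i j. x (i, j) \<longleftrightarrow> x (\<rho> i, \<rho> j)"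
    using assms by (auto simp: rel_preserving_def)
  define n where "n = einv x (e30 (i, i))"
  have en: "eR x n = e30 (i, i)" by (simp add: n_def eR_einv RG_e30)
  have "einv x (trf \<pi> (e30 (i, i))) = einv x (trf \<rho> (e30 (i, i)))"
    using fun_cong[OF assms(3), of n] by (simp add: liftR_def en)
  then have "trf \<pi> (e30 (i, i)) = trf \<rho> (e30 (i, i))"
    using trf_RG[OF b(1) e(1) RG_e30] trf_RG[OF b(2) e(2) RG_e30] eR_einv by metis
  then have "trf \<pi> (e30 (i, i)) (\<pi> i, \<pi> i) = trf \<rho> (e30 (i, i)) (\<pi> i, \<pi> i)" by simp
  then have "inv_into UNIV \<rho> (\<pi> i) = i" using b by (simp add: trf_def e30_def bij_is_inj split: if_splits)
  then show "\<pi> i = \<rho> i" using b(2) by (metis bij_inv_eq_iff)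
qed



lemma PiM_measR:
  fixes F :: "'x \<Rightarrow> 'a \<Rightarrow> 'b"
  assumes "\<And>i. (\<lambda>E. F E i) \<in> measurable M (count_space UNIV)"
  shows "F \<in> measurable M code_space"
proof -
  have "(\<lambda>E i. F E i) \<in> measurable M (PiM UNIV (\<lambda>_. count_space UNIV))"
    by (rule measurable_PiM_single') (use assms in auto)
  then show ?thesis by (simp add: code_space_def)
qed

lemma comp_E: "(\<lambda>E. E x) \<in> measurable (code_space :: (nat \<times> nat \<Rightarrow> bool) measure) (count_space UNIV)"
  unfolding code_space_def by (rule measurable_component_singleton) simp

lemma memb_meas: "Measurable.pred code_space (\<lambda>E. f \<in> RG E)"
proof -
  define C where "C = (f \<in> Aset \<and> (\<forall>i j k. f (i, j) mod 2 = f (i, k) mod 2) \<and> (\<forall>i j. f (i, j) mod 3 = f (j, i) mod 3))"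
  have eq: "(\<lambda>E. f \<in> RG E) = (\<lambda>E. C \<and> (\<forall>i j. E (i, j) \<longrightarrow> f (i, j) mod 5 = f (j, i) mod 5))"
    by (rule ext) (auto simp: RG_def C_def)
  note [measurable] = comp_E
  show ?thesis unfolding eq by measurable
qed

lemma enum_meas: "(\<lambda>E. enum E k) \<in> measurable code_space (count_space UNIV)"
proof (induction k)
  case 0
  have "(\<lambda>E. enum E 0) = (\<lambda>E. LEAST n. aA n \<in> RG E)" by (simp add: enum_def SE_def enumerate_0)
  moreover have "(\<lambda>E. LEAST n. aA n \<in> RG E) \<in> measurable code_space (count_space UNIV)"
    by (rule measurable_Least) (rule memb_meas)
  ultimately show ?case by simp
next
  case (Suc k)
  have "(\<lambda>E. enum E (Suc k)) = (\<lambda>E. LEAST s. aA s \<in> RG E \<and> enum E k < s)"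
    by (rule ext) (simp only: enum_def enumerate_Suc''[OF SE_inf], simp add: SE_def)
  moreover have "(\<lambda>E. LEAST s. aA s \<in> RG E \<and> enum E k < s) \<in> measurable code_space (count_space UNIV)"
  proof (rule measurable_Least)
    fix s
    have 1: "Measurable.pred code_space (\<lambda>E. enum E k < s)"
      using measurable_compose[OF Suc measurable_count_space, of "\<lambda>n. n < s"] by simp
    show "Measurable.pred code_space (\<lambda>E. aA s \<in> RG E \<and> enum E k < s)"
      by (rule pred_intros_logic(3)[OF memb_meas 1])
  qed
  ultimately show ?case by simp
qed

lemma nat_comp3:
  fixes H :: "nat \<Rightarrow> nat \<Rightarrow> nat \<Rightarrow> bool" and g1 g2 g3 :: "'a \<Rightarrow> nat"
  assumes g1: "g1 \<in> measurable M (count_space UNIV)" and g2: "g2 \<in> measurable M (count_space UNIV)"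
    and g3: "g3 \<in> measurable M (count_space UNIV)"
  shows "(\<lambda>E. H (g1 E) (g2 E) (g3 E)) \<in> measurable M (count_space UNIV)"
proof -
  have s1: "\<And>i j. (\<lambda>E. H i j (g3 E)) \<in> measurable M (count_space UNIV)"
  proof -
    fix i j
    show "(\<lambda>E. H i j (g3 E)) \<in> measurable M (count_space UNIV)"
      by (rule measurable_compose_countable[where f="\<lambda>l E. H i j l", OF _ g3]) simp
  qed
  have s2: "\<And>i. (\<lambda>E. H i (g2 E) (g3 E)) \<in> measurable M (count_space UNIV)"
  proof -
    fix i
    show "(\<lambda>E. H i (g2 E) (g3 E)) \<in> measurable M (count_space UNIV)"
      by (rule measurable_compose_countable[where f="\<lambda>j E. H i j (g3 E)", OF s1 g2])
  qed
  show ?thesis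
    by (rule measurable_compose_countable[where f="\<lambda>i E. H i (g2 E) (g3 E)", OF s2 g1])
qed

lemma einv_least: "f \<in> RG E \<Longrightarrow> einv E f = (LEAST k. eR E k = f)"
proof -
  assume f: "f \<in> RG E"
  show ?thesis
  proof (rule Least_equality[symmetric])
    show "eR E (einv E f) = f" using eR_einv[OF f] .
    fix k assume "eR E k = f"
    then have "k = einv E f" using einv_eR by metis
    then show "einv E f \<le> k" by simp
  qed
qed

lemma coord_meas:
  assumes op: "\<And>E a b. a \<in> RG E \<Longrightarrow> b \<in> RG E \<Longrightarrow> opf a b \<in> RG E"
  shows "(\<lambda>E. einv E (opf (eR E n) (eR E m))) \<in> measurable code_space (count_space UNIV)"
proof -
  have eq: "(\<lambda>E. einv E (opf (eR E n) (eR E m))) = (\<lambda>E. LEAST k. aA (enum E k) = opf (aA (enum E n)) (aA (enum E m)))"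
    by (rule ext) (simp add: einv_least op eR_in, simp add: eR_def)
  show ?thesis unfolding eq
  proof (rule measurable_Least)
    fix k
    show "(\<lambda>E. aA (enum E k) = opf (aA (enum E n)) (aA (enum E m))) \<in> measurable code_space (count_space UNIV)"
      by (rule nat_comp3[where H="\<lambda>i j l. aA i = opf (aA j) (aA l)", OF enum_meas enum_meas enum_meas])
  qed
qed

lemma fR_meas: "fR \<in> measurable code_space ring_code_space"
proof -
  have 1: "(\<lambda>E. fst (fR E)) \<in> measurable code_space code_space"
  proof (rule PiM_measR)
    fix i :: "nat \<times> nat"
    obtain n m where i: "i = (n, m)" by fastforce
    show "(\<lambda>E. fst (fR E) i) \<in> measurable code_space (count_space UNIV)"
      unfolding i fR_def by (simp add: coord_meas RG_add)
  qed
  have 2: "(\<lambda>E. snd (fR E)) \<in> measurable code_space code_space"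
  proof (rule PiM_measR)
    fix i :: "nat \<times> nat"
    obtain n m where i: "i = (n, m)" by fastforce
    show "(\<lambda>E. snd (fR E) i) \<in> measurable code_space (count_space UNIV)"
      unfolding i fR_def by (simp add: coord_meas RG_mul)
  qed
  have "(\<lambda>E. (fst (fR E), snd (fR E))) \<in> measurable code_space ring_code_space"
    unfolding ring_code_space_def by (rule measurable_Pair[OF 1 2])
  then show ?thesis by simp
qed


theorem ring_part: "spb_reduction code_space graphs rel_preserving ring_code_space unital_rings ring_preserving fR"
  unfolding spb_reduction_def
proof (intro conjI)
  show "fR \<in> measurable (restrict_space code_space graphs) (restrict_space ring_code_space unital_rings)"
    by (rule meas_restr[OF fR_meas fR_ring])
  show "(\<forall>x\<in>graphs. \<forall>y\<in>graphs. struct_iso rel_preserving x y \<longleftrightarrow> struct_iso ring_preserving (fR x) (fR y))"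
    "(\<forall>x\<in>graphs. aut_group rel_preserving x \<cong> aut_group ring_preserving (fR x))"
    using generic_spb[of ring_preserving fR liftR] R_L1 R_L2 R_L3 R_L4 by blast+
qed

theorem proposition5p8:
  shows "(\<exists>f. spb_reduction code_space graphs rel_preserving code_space partial_orders rel_preserving f)
       \<and> (\<exists>f. spb_reduction code_space graphs rel_preserving code_space semigroups op_preserving f)
       \<and> (\<exists>f. spb_reduction code_space graphs rel_preserving ring_code_space unital_rings ring_preserving f)"
  using poset_part semi_part ring_part by blast

end
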